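(* There is an absolute constant $c>0$ such that for every instance $I$ of continuous BGT (with $n\ge2$ and $h_{\max}>h_{\min}$), the schedule produced by Algorithm 2 satisfies $\mathrm{MH}\le c\cdot\log_2\lceil h_{\max}/h_{\min}\rceil\cdot\mathrm{OPT}(I)$. Algorithm 2: let $s=\lfloor\log_2(h_{\max}/h_{\min})\rfloor+1$ and, for $i=1,\dots,s$, $V_i=\{v_j\in V: 2^{i-1}h_{\min}\le h_j<2^i h_{\min}\}$ (with $v_j$ of rate $h_j=2^s h_{\min}$ impossible, so the $V_i$ partition $V$). For each nonempty $V_i$ compute a minimum spanning tree $T_i$ of $V_i$ and a directed closed Euler tour $C_i$ of $T_i$ (a cyclic walk traversing each edge of $T_i$ twice), and mark an arbitrary point of $C_i$ as its "last visited point". The robot starts at $v_1$ and repeats forever: for $i=1,\dots,s$ with $V_i\ne\emptyset$: travel directly to the last visited point of $C_i$; then, if $|V_i|\ge2$, walk along $C_i$ in the tour direction from that point, stopping at the first tour vertex at which the distance covered along $C_i$ in this phase is at least $D$, and make that vertex the new last visited point of $C_i$. Bamboos are cut whenever the robot is at their point.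
   Context: Continuous BGT: bamboos at points $V=\{v_1,\dots,v_n\}$, growth rates $h_1\ge\dots\ge h_n>0$, initial heights $0$; symmetric travel times $t_{i,j}>0$ ($i\ne j$) satisfying the triangle inequality. The robot starts at $v_1$ at time $0$, moving from $v_i$ to $v_j$ takes time $t_{i,j}$, and the bamboo at a point is cut instantaneously to $0$ whenever the robot is there. Height of $b_i$ at time $t$ = $h_i$ times time since its last cut (or since $0$). $\mathrm{MH}$ = supremum of all heights over all times; $\mathrm{OPT}(I)$ = infimum of $\mathrm{MH}$ over all robot walks. $h_{\max}=h_1$, $h_{\min}=h_n$, $D=\max_{i,j}t_{i,j}$. *)

theory Defs
  imports "HOL-Analysis.Analysis"
begin

text \<open>Points are indexed \<open>0,\<dots>,n-1\<close> (point \<open>i\<close> is the paper's \<open>v_{i+1}\<close>),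
  growth rates \<open>h i\<close>, travel times \<open>t i j\<close> (only used for \<open>i \<noteq> j\<close>).\<close>

definition bgt_instance :: "nat \<Rightarrow> (nat \<Rightarrow> real) \<Rightarrow> (nat \<Rightarrow> nat \<Rightarrow> real) \<Rightarrow> bool" where
  "bgt_instance n h t \<longleftrightarrow>
     n \<ge> 1 \<and>
     (\<forall>i<n. h i > 0) \<and>
     (\<forall>i j. i \<le> j \<and> j < n \<longrightarrow> h j \<le> h i) \<and>
     (\<forall>i<n. \<forall>j<n. i \<noteq> j \<longrightarrow> t i j > 0 \<and> t i j = t j i) \<and>
     (\<forall>i<n. \<forall>j<n. \<forall>k<n. i \<noteq> j \<and> j \<noteq> k \<and> i \<noteq> k \<longrightarrow> t i k \<le> t i j + t j k)"

definition hmax :: "nat \<Rightarrow> (nat \<Rightarrow> real) \<Rightarrow> real" where "hmax n h = h 0"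
definition hmin :: "nat \<Rightarrow> (nat \<Rightarrow> real) \<Rightarrow> real" where "hmin n h = h (n - 1)"
definition Dmax :: "nat \<Rightarrow> (nat \<Rightarrow> nat \<Rightarrow> real) \<Rightarrow> real" where
  "Dmax n t = Max {t i j | i j. i < n \<and> j < n \<and> i \<noteq> j}"

definition tt :: "(nat \<Rightarrow> nat \<Rightarrow> real) \<Rightarrow> nat \<Rightarrow> nat \<Rightarrow> real" where
  "tt t a b = (if a = b then 0 else t a b)"

text \<open>A walk is the sequence of points \<open>w 0, w 1, \<dots>\<close> visited; \<open>walk_time t w k\<close> is the
  time at which the robot is at \<open>w k\<close>.\<close>
definition walk_time :: "(nat \<Rightarrow> nat \<Rightarrow> real) \<Rightarrow> (nat \<Rightarrow> nat) \<Rightarrow> nat \<Rightarrow> real" where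
  "walk_time t w k = (\<Sum>j<k. tt t (w j) (w (Suc j)))"

definition robot_walk :: "nat \<Rightarrow> (nat \<Rightarrow> nat \<Rightarrow> real) \<Rightarrow> (nat \<Rightarrow> nat) \<Rightarrow> bool" where
  "robot_walk n t w \<longleftrightarrow> w 0 = 0 \<and> (\<forall>k. w k < n) \<and> (\<forall>\<tau>. \<exists>k. walk_time t w k > \<tau>)"

definition last_cut :: "(nat \<Rightarrow> nat) \<Rightarrow> (nat \<Rightarrow> real) \<Rightarrow> nat \<Rightarrow> real \<Rightarrow> real" where
  "last_cut w T i \<tau> = Sup ({0} \<union> {T k | k. w k = i \<and> T k \<le> \<tau>})"

definition height :: "(nat \<Rightarrow> real) \<Rightarrow> (nat \<Rightarrow> nat) \<Rightarrow> (nat \<Rightarrow> real) \<Rightarrow> nat \<Rightarrow> real \<Rightarrow> real" where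
  "height h w T i \<tau> = h i * (\<tau> - last_cut w T i \<tau>)"

definition MH :: "nat \<Rightarrow> (nat \<Rightarrow> real) \<Rightarrow> (nat \<Rightarrow> nat) \<Rightarrow> (nat \<Rightarrow> real) \<Rightarrow> ereal" where
  "MH n h w T = (SUP i\<in>{..<n}. SUP \<tau>\<in>{0..}. ereal (height h w T i \<tau>))"

definition OPT :: "nat \<Rightarrow> (nat \<Rightarrow> real) \<Rightarrow> (nat \<Rightarrow> nat \<Rightarrow> real) \<Rightarrow> ereal" where
  "OPT n h t = (INF w\<in>{w. robot_walk n t w}. MH n h w (walk_time t w))"

definition num_classes :: "nat \<Rightarrow> (nat \<Rightarrow> real) \<Rightarrow> nat" where
  "num_classes n h = nat \<lfloor>log 2 (hmax n h / hmin n h)\<rfloor> + 1"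

definition cls :: "nat \<Rightarrow> (nat \<Rightarrow> real) \<Rightarrow> nat \<Rightarrow> nat set" where
  "cls n h i = {j. j < n \<and> 2 ^ (i - 1) * hmin n h \<le> h j \<and> h j < 2 ^ i * hmin n h}"

text \<open>Undirected edges are stored as pairs \<open>(a,b)\<close> with \<open>a < b\<close>.\<close>
definition adj :: "(nat \<times> nat) set \<Rightarrow> nat \<Rightarrow> nat \<Rightarrow> bool" where
  "adj E a b \<longleftrightarrow> (a, b) \<in> E \<or> (b, a) \<in> E"

definition spanning_tree :: "nat set \<Rightarrow> (nat \<times> nat) set \<Rightarrow> bool" where
  "spanning_tree V E \<longleftrightarrow> finite V \<and>
     E \<subseteq> {(a, b). a \<in> V \<and> b \<in> V \<and> a < b} \<and>
     (\<forall>a\<in>V. \<forall>b\<in>V. (a, b) \<in> {(x, y). adj E x y}\<^sup>*) \<and>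
     card E + 1 = card V"

definition tree_weight :: "(nat \<Rightarrow> nat \<Rightarrow> real) \<Rightarrow> (nat \<times> nat) set \<Rightarrow> real" where
  "tree_weight t E = (\<Sum>(a, b)\<in>E. t a b)"

definition min_spanning_tree :: "(nat \<Rightarrow> nat \<Rightarrow> real) \<Rightarrow> nat set \<Rightarrow> (nat \<times> nat) set \<Rightarrow> bool" where
  "min_spanning_tree t V E \<longleftrightarrow> spanning_tree V E \<and>
     (\<forall>E'. spanning_tree V E' \<longrightarrow> tree_weight t E \<le> tree_weight t E')"

text \<open>A closed Euler tour of the tree (each edge traversed twice), as a cyclic list of vertices:
  the tour goes \<open>c!0 \<rightarrow> c!1 \<rightarrow> \<dots> \<rightarrow> c!(m-1) \<rightarrow> c!0\<close>.\<close>
definition euler_tour :: "(nat \<times> nat) set \<Rightarrow> nat list \<Rightarrow> bool" where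
  "euler_tour E c \<longleftrightarrow> length c = 2 * card E \<and>
     (\<forall>k<length c. adj E (c ! k) (c ! ((k + 1) mod length c))) \<and>
     (\<forall>e\<in>E. card {k. k < length c \<and> {c ! k, c ! ((k + 1) mod length c)} = {fst e, snd e}} = 2)"

text \<open>Admissible choices for Algorithm 2: a tour \<open>C i\<close> for each nonempty class (the one-point
  list for a singleton class) and an initial marked position \<open>p0 i\<close> on it.\<close>
definition alg_choices :: "nat \<Rightarrow> (nat \<Rightarrow> real) \<Rightarrow> (nat \<Rightarrow> nat \<Rightarrow> real) \<Rightarrow> (nat \<Rightarrow> nat list) \<Rightarrow> (nat \<Rightarrow> nat) \<Rightarrow> bool" where
  "alg_choices n h t C p0 \<longleftrightarrow>
     (\<forall>i\<in>{1..num_classes n h}. cls n h i \<noteq> {} \<longrightarrow>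
        (card (cls n h i) = 1 \<longrightarrow> C i = [the_elem (cls n h i)]) \<and>
        (card (cls n h i) \<ge> 2 \<longrightarrow> (\<exists>E. min_spanning_tree t (cls n h i) E \<and> euler_tour E (C i))) \<and>
        p0 i < length (C i))"

definition phase_steps :: "(nat \<Rightarrow> nat \<Rightarrow> real) \<Rightarrow> real \<Rightarrow> nat list \<Rightarrow> nat \<Rightarrow> nat" where
  "phase_steps t D c p = (LEAST k. D \<le> (\<Sum>j<k. t (c ! ((p + j) mod length c)) (c ! ((p + j + 1) mod length c))))"

text \<open>One phase on tour \<open>c\<close> from marked position \<open>p\<close>: the list of points visited
  (starting with the marked point, reached by direct travel) and the new marked position.\<close>
definition phase :: "(nat \<Rightarrow> nat \<Rightarrow> real) \<Rightarrow> real \<Rightarrow> nat list \<Rightarrow> nat \<Rightarrow> nat list \<times> nat" where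
  "phase t D c p =
     (if length c \<le> 1 then ([c ! p], p)
      else let k = phase_steps t D c p
           in (map (\<lambda>j. c ! ((p + j) mod length c)) [0..<k + 1], (p + k) mod length c))"

definition alg_round :: "nat \<Rightarrow> (nat \<Rightarrow> real) \<Rightarrow> (nat \<Rightarrow> nat \<Rightarrow> real) \<Rightarrow> (nat \<Rightarrow> nat list) \<Rightarrow>
    (nat \<Rightarrow> nat) \<Rightarrow> nat list \<times> (nat \<Rightarrow> nat)" where
  "alg_round n h t C pos =
     fold (\<lambda>i (acc, ps). if cls n h i = {} then (acc, ps)
                          else (case phase t (Dmax n t) (C i) (ps i) of
                                  (l, p') \<Rightarrow> (acc @ l, ps(i := p'))))
          [1..<num_classes n h + 1] ([], pos)"

definition alg_state :: "nat \<Rightarrow> (nat \<Rightarrow> real) \<Rightarrow> (nat \<Rightarrow> nat \<Rightarrow> real) \<Rightarrow> (nat \<Rightarrow> nat list) \<Rightarrow>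
    (nat \<Rightarrow> nat) \<Rightarrow> nat \<Rightarrow> nat \<Rightarrow> nat" where
  "alg_state n h t C p0 r = ((\<lambda>pos. snd (alg_round n h t C pos)) ^^ r) p0"

definition alg_round_list :: "nat \<Rightarrow> (nat \<Rightarrow> real) \<Rightarrow> (nat \<Rightarrow> nat \<Rightarrow> real) \<Rightarrow> (nat \<Rightarrow> nat list) \<Rightarrow>
    (nat \<Rightarrow> nat) \<Rightarrow> nat \<Rightarrow> nat list" where
  "alg_round_list n h t C p0 r = fst (alg_round n h t C (alg_state n h t C p0 r))"

text \<open>Infinite concatenation of a sequence of (nonempty) lists.\<close>
definition flat_prefix :: "(nat \<Rightarrow> 'a list) \<Rightarrow> nat \<Rightarrow> nat" where
  "flat_prefix R r = (\<Sum>q<r. length (R q))"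

definition flat :: "(nat \<Rightarrow> 'a list) \<Rightarrow> nat \<Rightarrow> 'a" where
  "flat R k = (let r = (LEAST r. k < flat_prefix R (Suc r)) in R r ! (k - flat_prefix R r))"

definition alg_walk :: "nat \<Rightarrow> (nat \<Rightarrow> real) \<Rightarrow> (nat \<Rightarrow> nat \<Rightarrow> real) \<Rightarrow> (nat \<Rightarrow> nat list) \<Rightarrow>
    (nat \<Rightarrow> nat) \<Rightarrow> nat \<Rightarrow> nat" where
  "alg_walk n h t C p0 k = (if k = 0 then 0 else flat (alg_round_list n h t C p0) (k - 1))"

end

theory Submission
  imports Defs
begin

lemma bgtD:
  assumes "bgt_instance n h t"
  shows "n \<ge> 1" "\<And>i. i<n \<Longrightarrow> h i > 0" "\<And>i j. i \<le> j \<Longrightarrow> j < n \<Longrightarrow> h j \<le> h i"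
    "\<And>i j. i<n \<Longrightarrow> j<n \<Longrightarrow> i \<noteq> j \<Longrightarrow> t i j > 0"
    "\<And>i j. i<n \<Longrightarrow> j<n \<Longrightarrow> i \<noteq> j \<Longrightarrow> t i j = t j i"
    "\<And>i j k. i<n \<Longrightarrow> j<n \<Longrightarrow> k<n \<Longrightarrow> i \<noteq> j \<Longrightarrow> j \<noteq> k \<Longrightarrow> i \<noteq> k \<Longrightarrow> t i k \<le> t i j + t j k"
  using assms unfolding bgt_instance_def by blast+

lemma tt_nonneg: "bgt_instance n h t \<Longrightarrow> a < n \<Longrightarrow> b < n \<Longrightarrow> tt t a b \<ge> 0"
  unfolding tt_def using bgtD(4) by fastforce

lemma tt_sym: "bgt_instance n h t \<Longrightarrow> a < n \<Longrightarrow> b < n \<Longrightarrow> tt t a b = tt t b a"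
  unfolding tt_def using bgtD(5) by fastforce

lemma tt_tri: assumes "bgt_instance n h t" "a < n" "b < n" "c < n"
  shows "tt t a c \<le> tt t a b + tt t b c"
proof -
  have "tt t a b \<ge> 0" "tt t b c \<ge> 0" "tt t a c \<ge> 0" using tt_nonneg assms by auto
  moreover have "tt t a b = tt t b a" using tt_sym assms by auto
  ultimately show ?thesis using bgtD(6)[OF assms(1,2,3,4)] unfolding tt_def
    by (cases "a = b"; cases "b = c"; cases "a = c"; auto)
qed

lemma Dmax_ge: assumes "a < n" "b < n" "a \<noteq> b"
  shows "t a b \<le> Dmax n t"
proof -
  have fin: "finite {t i j | i j. i < n \<and> j < n \<and> i \<noteq> j}"
  proof -
    have "{t i j | i j. i < n \<and> j < n \<and> i \<noteq> j} \<subseteq> (\<lambda>(i,j). t i j) ` ({..<n} \<times> {..<n})" by auto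
    thus ?thesis by (rule finite_subset) auto
  qed
  show ?thesis unfolding Dmax_def using assms by (intro Max_ge[OF fin]) auto
qed

lemma Dmax_attained: assumes "n \<ge> 2"
  shows "\<exists>a b. a < n \<and> b < n \<and> a \<noteq> b \<and> t a b = Dmax n t"
proof -
  have fin: "finite {t i j | i j. i < n \<and> j < n \<and> i \<noteq> j}"
  proof -
    have "{t i j | i j. i < n \<and> j < n \<and> i \<noteq> j} \<subseteq> (\<lambda>(i,j). t i j) ` ({..<n} \<times> {..<n})" by auto
    thus ?thesis by (rule finite_subset) auto
  qed
  have ne: "{t i j | i j. i < n \<and> j < n \<and> i \<noteq> j} \<noteq> {}" using assms
  proof -
    have "t 0 1 \<in> {t i j | i j. i < n \<and> j < n \<and> i \<noteq> j}" using assms by force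
    thus ?thesis by blast
  qed
  from Max_in[OF fin ne] obtain a b where "a < n" "b < n" "a \<noteq> b"
    "Max {t i j | i j. i < n \<and> j < n \<and> i \<noteq> j} = t a b" by auto
  thus ?thesis unfolding Dmax_def by metis
qed

lemma Dmax_pos: "bgt_instance n h t \<Longrightarrow> n \<ge> 2 \<Longrightarrow> Dmax n t > 0"
  using Dmax_attained[of n t] bgtD(4) by fastforce

lemma tt_le_D: "a < n \<Longrightarrow> b < n \<Longrightarrow> n \<ge> 2 \<Longrightarrow> bgt_instance n h t \<Longrightarrow> tt t a b \<le> Dmax n t"
  unfolding tt_def using Dmax_ge[of a n b t] Dmax_pos[of n h t] by auto

lemma walk_time_Suc: "walk_time t w (Suc k) = walk_time t w k + tt t (w k) (w (Suc k))"
  unfolding walk_time_def by simp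

lemma walk_time_mono: assumes "bgt_instance n h t" "\<forall>k. w k < n" "j \<le> k"
  shows "walk_time t w j \<le> walk_time t w k"
  using assms(3)
proof (induction k)
  case 0 thus ?case by simp
next
  case (Suc k)
  show ?case
  proof (cases "j = Suc k")
    case False
    hence "j \<le> k" using Suc by auto
    thus ?thesis using Suc.IH walk_time_Suc[of t w k] tt_nonneg[OF assms(1), of "w k" "w (Suc k)"] assms(2) by auto
  qed simp
qed

lemma walk_seg: assumes "bgt_instance n h t" "\<forall>k. w k < n" "j \<le> k"
  shows "tt t (w j) (w k) \<le> walk_time t w k - walk_time t w j"
  using assms(3)
proof (induction k)
  case 0 thus ?case by (simp add: tt_def)
next
  case (Suc k)
  show ?case
  proof (cases "j = Suc k")
    case True thus ?thesis by (simp add: tt_def)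
  next
    case False
    hence "j \<le> k" using Suc by auto
    thus ?thesis using Suc.IH walk_time_Suc[of t w k] tt_tri[OF assms(1), of "w j" "w k" "w (Suc k)"] assms(2) by auto
  qed
qed

lemma walk_time_diff: "walk_time t w (a + l) - walk_time t w a = (\<Sum>j<l. tt t (w (a+j)) (w (a + j + 1)))"
  by (induction l) (auto simp: walk_time_Suc)

lemma last_cut_ge: assumes "w k = i" "T k \<le> \<tau>"
  shows "T k \<le> last_cut w T i \<tau>"
  unfolding last_cut_def
  by (rule cSup_upper) (use assms in \<open>auto intro!: bdd_aboveI[of _ "max 0 \<tau>"]\<close>)

lemma last_cut_ge0: "0 \<le> last_cut w T i \<tau>"
  unfolding last_cut_def
  by (rule cSup_upper) (auto intro!: bdd_aboveI[of _ "max 0 \<tau>"])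

lemma last_cut_le: "0 \<le> \<tau> \<Longrightarrow> last_cut w T i \<tau> \<le> \<tau>"
  unfolding last_cut_def by (rule cSup_least) auto

lemma last_cut_gt: assumes "y < last_cut w T i \<tau>" "0 \<le> y"
  shows "\<exists>k. w k = i \<and> T k \<le> \<tau> \<and> y < T k"
proof -
  have "\<exists>x\<in>{0} \<union> {T k | k. w k = i \<and> T k \<le> \<tau>}. y < x"
    using assms(1) unfolding last_cut_def
    by (subst less_cSup_iff[symmetric]) (auto intro!: bdd_aboveI[of _ "max 0 \<tau>"])
  thus ?thesis using assms(2) by auto
qed

lemma height_le_cut: assumes "h i > 0" "height h w T i \<tau> \<le> M"
  shows "\<tau> - M / h i \<le> last_cut w T i \<tau>"
  using assms unfolding height_def by (simp add: field_simps mult.commute)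

lemma height_0: "height h w T i 0 = 0"
  unfolding height_def using last_cut_le[of 0 w T i] last_cut_ge0[of w T i 0] by simp

lemma walk_time_nonneg: "bgt_instance n h t \<Longrightarrow> \<forall>k. w k < n \<Longrightarrow> 0 \<le> walk_time t w k"
  using walk_time_mono[of n h t w 0 k] by (simp add: walk_time_def)

lemma far_point: assumes "bgt_instance n h t" "n \<ge> 2" "x < n"
  shows "\<exists>y<n. y \<noteq> x \<and> Dmax n t / 2 \<le> t x y"
proof -
  obtain a b where ab: "a < n" "b < n" "a \<noteq> b" "t a b = Dmax n t" using Dmax_attained[OF assms(2)] by blast
  show ?thesis
  proof (cases "x = a \<or> x = b")
    case True
    then show ?thesis using ab bgtD(5)[OF assms(1)] Dmax_pos[OF assms(1,2)]
      by (metis field_sum_of_halves le_add_same_cancel1 less_eq_real_def half_gt_zero)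
  next
    case False
    hence "t a b \<le> t a x + t x b" using bgtD(6)[OF assms(1)] ab assms(3) by metis
    moreover have "t a x = t x a" using bgtD(5)[OF assms(1)] ab assms(3) False by metis
    ultimately have "Dmax n t / 2 \<le> t x a \<or> Dmax n t / 2 \<le> t x b" using ab by linarith
    thus ?thesis using ab False by metis
  qed
qed

lemma LB1: assumes bgt: "bgt_instance n h t" and n2: "n \<ge> 2" and rw: "\<forall>k. w k < n"
  and Hb: "\<forall>i<n. \<forall>\<tau>\<ge>0. height h w (walk_time t w) i \<tau> \<le> M" and x: "x < n"
  shows "h x * Dmax n t / 2 \<le> M"
proof -
  define T where "T = walk_time t w"
  obtain y where y: "y < n" "y \<noteq> x" "Dmax n t / 2 \<le> t x y" using far_point[OF bgt n2 x] by blast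
  have hx: "h x > 0" and hy: "h y > 0" using bgtD(2)[OF bgt] x y by auto
  have M0: "0 \<le> M" using Hb x height_0[of h w "walk_time t w" x] by fastforce
  have Tnn: "\<And>k. 0 \<le> T k" using walk_time_nonneg[OF bgt rw] T_def by simp
  have Tmono: "\<And>j k. j \<le> k \<Longrightarrow> T j \<le> T k" using walk_time_mono[OF bgt rw] T_def by simp
  have seg: "\<And>j k. j \<le> k \<Longrightarrow> tt t (w j) (w k) \<le> T k - T j" using walk_seg[OF bgt rw] T_def by simp
  have cut: "\<And>i \<tau>. i < n \<Longrightarrow> 0 \<le> \<tau> \<Longrightarrow> \<tau> - M / h i \<le> last_cut w T i \<tau>"
    using height_le_cut Hb bgtD(2)[OF bgt] T_def by blast
  have txy: "t x y > 0" using bgtD(4)[OF bgt] x y by auto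
  have "h x * t x y \<le> M"
  proof (rule ccontr)
    assume "\<not> h x * t x y \<le> M"
    hence Mlt: "M / h x < t x y" using hx by (simp add: field_simps mult.commute)
    have "1 \<le> last_cut w T x (M / h x + 1)" using cut[OF x, of "M/h x + 1"] M0 hx by simp
    hence "0 < last_cut w T x (M / h x + 1)" by linarith
    then obtain j where j: "w j = x" using last_cut_gt[of 0 w T x] by auto
    have "T j + 1 \<le> last_cut w T y (T j + M / h y + 1)" using cut[OF y(1), of "T j + M / h y + 1"] M0 hy Tnn[of j] by simp
    hence "T j < last_cut w T y (T j + M / h y + 1)" by linarith
    then obtain k where k: "w k = y" "T j < T k" using last_cut_gt[of "T j" w T y] Tnn[of j] by blast
    have jk: "j \<le> k" using k Tmono by (meson linorder_le_cases not_less)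
    have "t x y \<le> T k - T j" using seg[OF jk] j k y by (simp add: tt_def)
    have "T k - M / h x \<le> last_cut w T x (T k)" using cut[OF x Tnn[of k]] .
    hence "T k - t x y < last_cut w T x (T k)" using Mlt by linarith
    moreover have "0 \<le> T k - t x y" using \<open>t x y \<le> T k - T j\<close> Tnn[of j] by linarith
    ultimately obtain m where m: "w m = x" "T m \<le> T k" "T k - t x y < T m" using last_cut_gt by blast
    show False
    proof (cases "m \<le> k")
      case True
      have "t x y \<le> T k - T m" using seg[OF True] m k y by (simp add: tt_def)
      thus False using m by linarith
    next
      case False
      have "tt t y x \<le> T m - T k" using seg[of k m] False m k by simp
      moreover have "tt t y x > 0" using y x bgtD(4)[OF bgt] by (simp add: tt_def)
      ultimately show False using m by linarith
    qed
  qed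
  moreover have "h x * Dmax n t / 2 \<le> h x * t x y" using y(3) hx by (simp add: field_simps)
  ultimately show ?thesis by linarith
qed

fun pedges :: "nat list \<Rightarrow> (nat \<times> nat) set" where
  "pedges (a # b # xs) = insert (min a b, max a b) (pedges (b # xs))"
| "pedges _ = {}"

fun psum :: "(nat \<Rightarrow> nat \<Rightarrow> real) \<Rightarrow> nat list \<Rightarrow> real" where
  "psum t (a # b # xs) = t a b + psum t (b # xs)"
| "psum t _ = 0"

lemma pedges_sub: "(a, b) \<in> pedges xs \<Longrightarrow> a \<in> set xs \<and> b \<in> set xs"
  by (induction xs rule: pedges.induct) (auto simp: min_def max_def split: if_splits)

lemma pedges_lt: "distinct xs \<Longrightarrow> (a, b) \<in> pedges xs \<Longrightarrow> a < b"
  by (induction xs rule: pedges.induct) (auto simp: min_def max_def split: if_splits)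

lemma pedges_finite: "finite (pedges xs)"
  by (induction xs rule: pedges.induct) auto

lemma pedges_card: "distinct xs \<Longrightarrow> xs \<noteq> [] \<Longrightarrow> card (pedges xs) + 1 = length xs"
proof (induction xs rule: pedges.induct)
  case (1 a b xs)
  have "(min a b, max a b) \<notin> pedges (b # xs)"
  proof
    assume "(min a b, max a b) \<in> pedges (b # xs)"
    hence "min a b \<in> set (b # xs)" "max a b \<in> set (b # xs)" using pedges_sub by blast+
    moreover have "a \<notin> set (b # xs)" using 1 by auto
    ultimately show False by (cases "a \<le> b") (auto simp: min_def max_def)
  qed
  thus ?case using 1 pedges_finite by simp
qed auto

lemma pedges_conn: "pedges xs \<subseteq> E \<Longrightarrow> xs \<noteq> [] \<Longrightarrow> a \<in> set xs \<Longrightarrow>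
   (hd xs, a) \<in> {(x, y). adj E x y}\<^sup>* \<and> (a, hd xs) \<in> {(x, y). adj E x y}\<^sup>*"
proof (induction xs arbitrary: a rule: pedges.induct)
  case (1 x y xs)
  have "(min x y, max x y) \<in> E" using 1(2) by simp
  hence e: "adj E x y \<and> adj E y x" by (cases "x \<le> y") (simp_all add: adj_def min_def max_def)
  show ?case
  proof (cases "a = x")
    case False
    hence a: "a \<in> set (y # xs)" using 1(4) by simp
    have sub: "pedges (y # xs) \<subseteq> E" using 1(2) by simp
    have "(y, a) \<in> {(x, y). adj E x y}\<^sup>* \<and> (a, y) \<in> {(x, y). adj E x y}\<^sup>*"
      using 1(1)[OF sub _ a] by simp
    moreover have "(x, y) \<in> {(x, y). adj E x y}" "(y, x) \<in> {(x, y). adj E x y}" using e by auto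
    ultimately show ?thesis
      by (metis list.sel(1) converse_rtrancl_into_rtrancl rtrancl_into_rtrancl)
  qed simp
qed (auto simp del: rtrancl_eq_or_trancl)

lemma pedges_tree: assumes "distinct xs" "xs \<noteq> []"
  shows "spanning_tree (set xs) (pedges xs)"
  unfolding spanning_tree_def
proof (intro conjI ballI)
  show "pedges xs \<subseteq> {(a, b). a \<in> set xs \<and> b \<in> set xs \<and> a < b}"
    using pedges_sub pedges_lt[OF assms(1)] by blast
  fix a b assume "a \<in> set xs" "b \<in> set xs"
  thus "(a, b) \<in> {(x, y). adj (pedges xs) x y}\<^sup>*"
    using pedges_conn[of xs "pedges xs"] assms(2) by (meson order_refl rtrancl_trans)
next
  show "card (pedges xs) + 1 = card (set xs)" using pedges_card[OF assms] distinct_card[OF assms(1)] by simp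
qed simp

definition symon :: "nat set \<Rightarrow> (nat \<Rightarrow> nat \<Rightarrow> real) \<Rightarrow> bool" where
  "symon S t \<longleftrightarrow> (\<forall>a\<in>S. \<forall>b\<in>S. t a b = t b a)"

lemma pedges_weight: "distinct xs \<Longrightarrow> symon (set xs) t \<Longrightarrow> tree_weight t (pedges xs) = psum t xs"
proof (induction xs rule: pedges.induct)
  case (1 a b xs)
  have nin: "(min a b, max a b) \<notin> pedges (b # xs)"
  proof
    assume "(min a b, max a b) \<in> pedges (b # xs)"
    hence "min a b \<in> set (b # xs)" "max a b \<in> set (b # xs)" using pedges_sub by blast+
    moreover have "a \<notin> set (b # xs)" using 1(2) by auto
    ultimately show False by (cases "a \<le> b") (auto simp: min_def max_def)
  qed
  have sab: "t b a = t a b" using 1(3) unfolding symon_def by (metis list.set_intros(1) list.set_intros(2))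
  have "t (min a b) (max a b) = t a b" using sab by (auto simp: min_def max_def)
  moreover have "distinct (b # xs)" using 1(2) by simp
  moreover have "symon (set (b#xs)) t" using 1(3) unfolding symon_def by (meson list.set_intros(2))
  ultimately have "tree_weight t (pedges (b # xs)) = psum t (b # xs)"
    "t (min a b) (max a b) = t a b" using 1(1) by blast+
  thus ?case using nin pedges_finite unfolding tree_weight_def by simp
qed (auto simp: tree_weight_def)

lemma psum_walk: assumes bgt: "bgt_instance n h t" and rw: "\<forall>k. w k < n"
  shows "sorted ks \<Longrightarrow> distinct (map w ks) \<Longrightarrow> ks \<noteq> [] \<Longrightarrow>
    psum t (map w ks) \<le> walk_time t w (last ks) - walk_time t w (hd ks)"
proof (induction ks rule: induct_list012)
  case (3 a b ks)
  have "a \<le> b" using 3(3) by simp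
  hence "tt t (w a) (w b) \<le> walk_time t w b - walk_time t w a" using walk_seg[OF bgt rw] by blast
  moreover have "tt t (w a) (w b) = t (w a) (w b)" using 3(4) by (simp add: tt_def)
  moreover have "psum t (map w (b # ks)) \<le> walk_time t w (last (b#ks)) - walk_time t w b"
    using 3 by simp
  ultimately show ?case by simp
qed auto

lemma LB2: assumes bgt: "bgt_instance n h t" and n2: "n \<ge> 2" and rw: "\<forall>k. w k < n"
  and Hb: "\<forall>i<n. \<forall>\<tau>\<ge>0. height h w (walk_time t w) i \<tau> \<le> M"
  and V: "V \<subseteq> {..<n}" "card V \<ge> 2" and mst: "min_spanning_tree t V E"
  and hl: "hl > 0" "\<forall>z\<in>V. hl \<le> h z"
  shows "hl * tree_weight t E \<le> 2 * M"
proof -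
  define T where "T = walk_time t w"
  have finV: "finite V" using V(2) card.infinite by fastforce
  obtain z0 where z0: "z0 \<in> V" using V(2) by fastforce
  have "h 0 * Dmax n t / 2 \<le> M" using LB1[OF bgt n2 rw Hb] n2 by simp
  moreover have "0 < h 0 * Dmax n t / 2" using bgtD(2)[OF bgt, of 0] Dmax_pos[OF bgt n2] n2 by simp
  ultimately have Mpos: "M > 0" by linarith
  define \<Delta> where "\<Delta> = M / hl"
  have Dpos: "\<Delta> > 0" using Mpos hl by (simp add: \<Delta>_def)
  have cut: "\<And>i \<tau>. i < n \<Longrightarrow> 0 \<le> \<tau> \<Longrightarrow> \<tau> - M / h i \<le> last_cut w T i \<tau>"
    using height_le_cut Hb bgtD(2)[OF bgt] T_def by blast
  have vis: "\<forall>z\<in>V. \<exists>k. w k = z \<and> T k \<le> 3 * \<Delta> \<and> \<Delta> < T k"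
  proof
    fix z assume z: "z \<in> V"
    hence zn: "z < n" using V by auto
    have "hl \<le> h z" using hl z by blast
    hence "M / h z \<le> \<Delta>" unfolding \<Delta>_def using hl Mpos
      by (intro divide_left_mono) auto
    hence "\<Delta> < last_cut w T z (3 * \<Delta>)" using cut[OF zn, of "3*\<Delta>"] Dpos by linarith
    thus "\<exists>k. w k = z \<and> T k \<le> 3 * \<Delta> \<and> \<Delta> < T k" using last_cut_gt[of \<Delta> w T z] Dpos by auto
  qed
  then obtain kf where kf0: "\<forall>z\<in>V. w (kf z) = z \<and> T (kf z) \<le> 3 * \<Delta> \<and> \<Delta> < T (kf z)"
    using bchoice[OF vis] by blast
  have kf: "\<And>z. z \<in> V \<Longrightarrow> w (kf z) = z \<and> T (kf z) \<le> 3 * \<Delta> \<and> \<Delta> < T (kf z)" using kf0 by blast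
  define K where "K = kf ` V"
  define ks where "ks = sorted_list_of_set K"
  have finK: "finite K" using finV K_def by simp
  have injk: "inj_on kf V" using kf by (metis inj_onI)
  have cardK: "card K = card V" using card_image[OF injk] K_def by simp
  have setks: "set ks = K" "sorted ks" "distinct ks" using finK ks_def by auto
  have "(\<lambda>z. w (kf z)) ` V = (\<lambda>z. z) ` V" by (rule image_cong) (simp_all add: kf)
  hence setz: "set (map w ks) = V" using setks(1) unfolding K_def by (simp add: image_image)
  have lenz: "length (map w ks) = card V" using distinct_card[OF setks(3)] setks(1) cardK by simp
  have "card (set (map w ks)) = length (map w ks)" using setz lenz by simp
  hence distz: "distinct (map w ks)" by (rule card_distinct)
  have ksne: "ks \<noteq> []" using setks(1) K_def z0 by auto
  have sp0: "spanning_tree (set (map w ks)) (pedges (map w ks))" using pedges_tree[OF distz] ksne by simp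
  have sp: "spanning_tree V (pedges (map w ks))" using sp0 setz by simp
  have "tree_weight t E \<le> tree_weight t (pedges (map w ks))" using mst sp unfolding min_spanning_tree_def by blast
  also have "\<dots> = psum t (map w ks)"
    using pedges_weight[OF distz] setz V bgtD(5)[OF bgt] unfolding symon_def by (metis lessThan_iff subset_iff)
  also have "\<dots> \<le> T (last ks) - T (hd ks)" using psum_walk[OF bgt rw setks(2) distz ksne] T_def by simp
  also have "\<dots> < 2 * \<Delta>"
  proof -
    have "last ks \<in> K" "hd ks \<in> K" using ksne setks(1) by auto
    then obtain z1 z2 where "z1 \<in> V" "z2 \<in> V" "last ks = kf z1" "hd ks = kf z2" unfolding K_def by blast
    thus ?thesis using kf[of z1] kf[of z2] by simp
  qed
  finally have "tree_weight t E < 2 * \<Delta>" .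
  thus ?thesis using hl unfolding \<Delta>_def by (simp add: field_simps)
qed

lemma MH_ge: assumes "\<forall>M. (\<forall>i<n. \<forall>\<tau>\<ge>0. height h w T i \<tau> \<le> M) \<longrightarrow> X \<le> M" "n \<ge> 1"
  shows "ereal X \<le> MH n h w T"
proof (cases "MH n h w T")
  case (real M)
  have "\<forall>i<n. \<forall>\<tau>\<ge>0. height h w T i \<tau> \<le> M"
  proof (intro allI impI)
    fix i \<tau> assume "i < n" "(0::real) \<le> \<tau>"
    hence "ereal (height h w T i \<tau>) \<le> MH n h w T" unfolding MH_def
      by (meson SUP_upper atLeast_iff lessThan_iff order_trans)
    thus "height h w T i \<tau> \<le> M" using real by simp
  qed
  thus ?thesis using assms real by simp
next
  case PInf thus ?thesis by simp
next
  case MInf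
  have "ereal (height h w T 0 0) \<le> MH n h w T" unfolding MH_def using assms(2)
    by (meson SUP_upper atLeast_iff lessThan_iff order_trans order_refl less_le_trans zero_less_one le_less)
  thus ?thesis using MInf by simp
qed

lemma MH_le: assumes "\<forall>i<n. \<forall>\<tau>\<ge>0. ereal (height h w T i \<tau>) \<le> B"
  shows "MH n h w T \<le> B"
  unfolding MH_def using assms by (auto intro!: SUP_least)

lemma OPT_ge: assumes "\<And>w. robot_walk n t w \<Longrightarrow> \<forall>M. (\<forall>i<n. \<forall>\<tau>\<ge>0. height h w (walk_time t w) i \<tau> \<le> M) \<longrightarrow> X \<le> M"
  "n \<ge> 1"
  shows "ereal X \<le> OPT n h t"
  unfolding OPT_def using MH_ge[OF assms(1) assms(2)] by (auto intro!: INF_greatest)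

lemma OPT_ge1: assumes "bgt_instance n h t" "n \<ge> 2" "x < n"
  shows "ereal (h x * Dmax n t / 2) \<le> OPT n h t"
  by (rule OPT_ge) (use assms LB1 in \<open>auto simp: robot_walk_def\<close>)

lemma OPT_ge2: assumes "bgt_instance n h t" "n \<ge> 2" "V \<subseteq> {..<n}" "card V \<ge> 2" "min_spanning_tree t V E"
    "hl > 0" "\<forall>z\<in>V. hl \<le> h z"
  shows "ereal (hl * tree_weight t E / 2) \<le> OPT n h t"
proof (rule OPT_ge)
  fix w assume "robot_walk n t w"
  hence rw: "\<forall>k. w k < n" by (simp add: robot_walk_def)
  show "\<forall>M. (\<forall>i<n. \<forall>\<tau>\<ge>0. height h w (walk_time t w) i \<tau> \<le> M) \<longrightarrow> hl * tree_weight t E / 2 \<le> M"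
    using LB2[OF assms(1,2) rw _ assms(3-7)] by (auto simp: mult.commute)
qed (use assms in auto)

lemma fold_round:
  "distinct is \<Longrightarrow> fold (\<lambda>i (acc, ps). if cls n h i = {} then (acc, ps)
                          else (case phase t Dd (C i) (ps i) of
                                  (l, p') \<Rightarrow> (acc @ l, ps(i := p')))) is (acc, ps) =
   (acc @ concat (map (\<lambda>i. if cls n h i = {} then [] else fst (phase t Dd (C i) (ps i))) is),
    (\<lambda>j. if j \<in> set is \<and> cls n h j \<noteq> {} then snd (phase t Dd (C j) (ps j)) else ps j))"
proof (induction "is" arbitrary: acc ps)
  case Nil thus ?case by simp
next
  case (Cons i "is")
  have ni: "i \<notin> set is" and d: "distinct is" using Cons.prems by auto
  show ?case
  proof (cases "cls n h i = {}")
    case True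
    show ?thesis using True Cons.IH[OF d, of acc ps] by (auto intro!: ext)
  next
    case False
    obtain l p' where lp: "phase t Dd (C i) (ps i) = (l, p')" by fastforce
    have eq: "map (\<lambda>j. if cls n h j = {} then [] else fst (phase t Dd (C j) ((ps(i := p')) j))) is
       = map (\<lambda>j. if cls n h j = {} then [] else fst (phase t Dd (C j) (ps j))) is"
      using ni by (intro map_cong) auto
    have "fold (\<lambda>i (acc, ps). if cls n h i = {} then (acc, ps)
                          else (case phase t Dd (C i) (ps i) of
                                  (l, p') \<Rightarrow> (acc @ l, ps(i := p')))) (i # is) (acc, ps)
      = fold (\<lambda>i (acc, ps). if cls n h i = {} then (acc, ps)
                          else (case phase t Dd (C i) (ps i) of
                                  (l, p') \<Rightarrow> (acc @ l, ps(i := p')))) is (acc @ l, ps(i := p'))"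
      using False lp by simp
    also have "\<dots> = ((acc @ l) @ concat (map (\<lambda>j. if cls n h j = {} then [] else fst (phase t Dd (C j) ((ps(i := p')) j))) is),
    (\<lambda>j. if j \<in> set is \<and> cls n h j \<noteq> {} then snd (phase t Dd (C j) ((ps(i := p')) j)) else (ps(i := p')) j))"
      by (rule Cons.IH[OF d])
    also have "(\<lambda>j. if j \<in> set is \<and> cls n h j \<noteq> {} then snd (phase t Dd (C j) ((ps(i := p')) j)) else (ps(i := p')) j)
       = (\<lambda>j. if j \<in> set (i#is) \<and> cls n h j \<noteq> {} then snd (phase t Dd (C j) (ps j)) else ps j)"
    proof (rule ext)
      fix j show "(if j \<in> set is \<and> cls n h j \<noteq> {} then snd (phase t Dd (C j) ((ps(i := p')) j)) else (ps(i := p')) j)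
       = (if j \<in> set (i#is) \<and> cls n h j \<noteq> {} then snd (phase t Dd (C j) (ps j)) else ps j)"
        using ni False lp by (cases "j = i") auto
    qed
    finally show ?thesis using eq False lp by simp
  qed
qed

locale alg =
  fixes n :: nat and h :: "nat \<Rightarrow> real" and t :: "nat \<Rightarrow> nat \<Rightarrow> real" and C :: "nat \<Rightarrow> nat list" and p0 :: "nat \<Rightarrow> nat"
  assumes n2: "n \<ge> 2" and bgt: "bgt_instance n h t" and hgt: "hmax n h > hmin n h"
    and ch: "alg_choices n h t C p0"
begin

abbreviation "s \<equiv> num_classes n h"
abbreviation "D \<equiv> Dmax n t"
abbreviation "hm \<equiv> hmin n h"

lemma hm_pos: "hm > 0" using bgtD(2)[OF bgt, of "n-1"] n2 unfolding hmin_def by simp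
lemma hm_le: "x < n \<Longrightarrow> hm \<le> h x" using bgtD(3)[OF bgt, of x "n-1"] unfolding hmin_def by simp
lemma hx_le: "x < n \<Longrightarrow> h x \<le> hmax n h" using bgtD(3)[OF bgt, of 0 x] unfolding hmax_def by simp
lemma D_pos: "D > 0" using Dmax_pos[OF bgt n2] .

definition cls_of :: "nat \<Rightarrow> nat" where "cls_of x = nat \<lfloor>log 2 (h x / hm)\<rfloor> + 1"

lemma cls_of: assumes x: "x < n" shows "cls_of x \<in> {1..s}" "x \<in> cls n h (cls_of x)"
proof -
  define q where "q = h x / hm"
  have q1: "1 \<le> q" using hm_le[OF x] hm_pos by (simp add: q_def)
  define f where "f = \<lfloor>log 2 q\<rfloor>"
  have f0: "0 \<le> f" using q1 by (simp add: f_def)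
  have "real_of_int f \<le> log 2 q" by (simp add: f_def)
  hence "2 powr real_of_int f \<le> 2 powr log 2 q" by (intro powr_mono) auto
  moreover have "2 powr real_of_int f = (2::real) ^ nat f" using f0 powr_realpow[of 2 "nat f"] by simp
  ultimately have a: "2 ^ nat f \<le> q" using q1 by simp
  have "log 2 q < real_of_int f + 1" by (simp add: f_def)
  hence l1: "2 powr log 2 q < 2 powr (real_of_int f + 1)" by (intro powr_less_mono) auto
  have e: "2 powr log 2 q = q" using q1 by simp
  have r: "real_of_int f + 1 = real (nat f + 1)" using f0 by simp
  have p: "2 powr real (nat f + 1) = (2::real) ^ (nat f + 1)" by (rule powr_realpow) simp
  have "2 powr (real_of_int f + 1) = (2::real) ^ (nat f + 1)" using p r by metis
  hence b: "q < 2 ^ (nat f + 1)" using l1 e by linarith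
  have "q \<le> hmax n h / hm" using hx_le[OF x] hm_pos by (simp add: q_def divide_right_mono)
  hence "log 2 q \<le> log 2 (hmax n h / hm)" using q1 by simp
  hence "f \<le> \<lfloor>log 2 (hmax n h / hm)\<rfloor>" unfolding f_def by (rule floor_mono)
  thus "cls_of x \<in> {1..s}" unfolding cls_of_def num_classes_def q_def[symmetric] f_def[symmetric] by simp
  show "x \<in> cls n h (cls_of x)" unfolding cls_def cls_of_def q_def[symmetric] f_def[symmetric]
    using a b x hm_pos by (simp add: q_def field_simps)
qed

lemma cls_sub: "cls n h i \<subseteq> {..<n}" unfolding cls_def by auto
lemma cls_fin: "finite (cls n h i)" using cls_sub finite_subset by blast

lemma cls_bounds: "x \<in> cls n h i \<Longrightarrow> 2 ^ (i - 1) * hm \<le> h x \<and> h x < 2 ^ i * hm \<and> x < n"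
  unfolding cls_def by auto

lemma cls_disj: assumes "x \<in> cls n h i" "x \<in> cls n h j" "i \<ge> 1" "j \<ge> 1" shows "i = j"
proof (rule ccontr)
  have lt: "a < b \<Longrightarrow> 1 \<le> a \<Longrightarrow> x \<in> cls n h a \<Longrightarrow> x \<in> cls n h b \<Longrightarrow> False" for a b
  proof -
    assume ab: "a < b" "1 \<le> a" and xa: "x \<in> cls n h a" and xb: "x \<in> cls n h b"
    have "(2::real) ^ a \<le> 2 ^ (b - 1)" using ab by (intro power_increasing) auto
    hence "2 ^ a * hm \<le> 2 ^ (b - 1) * hm" using hm_pos by simp
    thus False using cls_bounds[OF xa] cls_bounds[OF xb] by linarith
  qed
  assume "i \<noteq> j"
  thus False using lt assms by (metis linorder_neqE_nat)
qed

end

context alg begin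

abbreviation "st r \<equiv> alg_state n h t C p0 r"
abbreviation "R r \<equiv> alg_round_list n h t C p0 r"

definition G :: "nat \<Rightarrow> nat \<Rightarrow> nat list" where
  "G r i = (if cls n h i = {} then [] else fst (phase t D (C i) (st r i)))"

lemma round_eq: "alg_round n h t C pos =
   (concat (map (\<lambda>i. if cls n h i = {} then [] else fst (phase t D (C i) (pos i))) [1..<s+1]),
    (\<lambda>j. if j \<in> set [1..<s+1] \<and> cls n h j \<noteq> {} then snd (phase t D (C j) (pos j)) else pos j))"
  unfolding alg_round_def using fold_round[of "[1..<s+1]" n h t D C "[]" pos] by simp

lemma R_eq: "R r = concat (map (G r) [1..<s+1])"
  unfolding alg_round_list_def G_def round_eq by simp

lemma st_Suc: "st (Suc r) i = (if i \<in> {1..s} \<and> cls n h i \<noteq> {} then snd (phase t D (C i) (st r i)) else st r i)"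
  unfolding alg_state_def using round_eq by simp

lemma st_0: "st 0 = p0" unfolding alg_state_def by simp

definition good :: "nat list \<Rightarrow> bool" where
  "good c \<longleftrightarrow> 2 \<le> length c \<and> (\<forall>k<length c. c ! k < n) \<and> (\<forall>k<length c. c ! k \<noteq> c ! ((k + 1) mod length c))"

lemma single_class: assumes "i \<in> {1..s}" "cls n h i \<noteq> {}" "card (cls n h i) = 1"
  shows "C i = [the_elem (cls n h i)]" "the_elem (cls n h i) \<in> cls n h i" "cls n h i = {the_elem (cls n h i)}"
proof -
  show "C i = [the_elem (cls n h i)]" using ch assms unfolding alg_choices_def by blast
  obtain x where "cls n h i = {x}" using assms(3) card_1_singletonE by blast
  thus "the_elem (cls n h i) \<in> cls n h i" "cls n h i = {the_elem (cls n h i)}" by auto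
qed

lemma multi_class: assumes "i \<in> {1..s}" "card (cls n h i) \<ge> 2"
  shows "\<exists>E. min_spanning_tree t (cls n h i) E \<and> euler_tour E (C i)"
proof -
  have "cls n h i \<noteq> {}" using assms(2) by auto
  thus ?thesis using ch assms unfolding alg_choices_def by blast
qed

lemma adj_in: "E \<subseteq> {(a, b). a \<in> V \<and> b \<in> V \<and> a < b} \<Longrightarrow> adj E x y \<Longrightarrow> x \<in> V \<and> y \<in> V \<and> x \<noteq> y"
  unfolding adj_def by auto

lemma tour_props: assumes "spanning_tree V E" "euler_tour E c" "card V \<ge> 2" "V \<subseteq> {..<n}"
  shows "2 \<le> length c" "\<And>k. k < length c \<Longrightarrow> c ! k \<in> V"
    "\<And>k. k < length c \<Longrightarrow> c ! k \<noteq> c ! ((k + 1) mod length c)" "V \<subseteq> set c"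
proof -
  have Esub: "E \<subseteq> {(a, b). a \<in> V \<and> b \<in> V \<and> a < b}" and cE: "card E + 1 = card V" and finV: "finite V"
    using assms(1) unfolding spanning_tree_def by auto
  have len: "length c = 2 * card E" using assms(2) unfolding euler_tour_def by simp
  thus "2 \<le> length c" using cE assms(3) by simp
  have adjk: "\<And>k. k < length c \<Longrightarrow> adj E (c ! k) (c ! ((k + 1) mod length c))"
    using assms(2) unfolding euler_tour_def by blast
  show "c ! k \<in> V" if "k < length c" for k using adj_in[OF Esub adjk[OF that]] by blast
  show "c ! k \<noteq> c ! ((k + 1) mod length c)" if "k < length c" for k using adj_in[OF Esub adjk[OF that]] by blast
  show "V \<subseteq> set c"
  proof
    fix z assume z: "z \<in> V"
    have "\<not> V \<subseteq> {z}"
    proof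
      assume "V \<subseteq> {z}"
      hence "card V \<le> card {z}" by (rule card_mono[rotated]) simp
      thus False using assms(3) by simp
    qed
    then obtain b where b: "b \<in> V" "b \<noteq> z" by blast
    have "(z, b) \<in> {(x, y). adj E x y}\<^sup>*" using assms(1) z b unfolding spanning_tree_def by blast
    then obtain x where "adj E z x" using b(2) by (induction rule: converse_rtrancl_induct) auto
    then obtain e where e: "e \<in> E" "z = fst e \<or> z = snd e" unfolding adj_def by force
    have "card {k. k < length c \<and> {c ! k, c ! ((k + 1) mod length c)} = {fst e, snd e}} = 2"
      using assms(2) e(1) unfolding euler_tour_def by blast
    then obtain k where k: "k < length c" "{c ! k, c ! ((k + 1) mod length c)} = {fst e, snd e}"
      by (metis (mono_tags, lifting) Collect_empty_eq card.empty zero_neq_numeral)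
    have "(k + 1) mod length c < length c" using k(1) by (intro mod_less_divisor) linarith
    thus "z \<in> set c" using k e(2) by (metis doubleton_eq_iff insertI1 nth_mem)
  qed
qed

lemma st_lt: "i \<in> {1..s} \<Longrightarrow> cls n h i \<noteq> {} \<Longrightarrow> st r i < length (C i)"
proof (induction r)
  case 0 thus ?case using ch unfolding alg_choices_def st_0 by blast
next
  case (Suc r)
  have "0 < length (C i)" using Suc by linarith
  thus ?case using Suc unfolding st_Suc phase_def by (auto simp: Let_def)
qed

end

lemma find_step: fixes f :: "nat \<Rightarrow> 'a::linorder"
  shows "a \<le> b \<Longrightarrow> f a \<le> u \<Longrightarrow> u < f b \<Longrightarrow> \<exists>r. a \<le> r \<and> r < b \<and> f r \<le> u \<and> u < f (Suc r)"
proof (induction b)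
  case 0 thus ?case by (metis le_zero_eq not_le)
next
  case (Suc b)
  show ?case
  proof (cases "a = Suc b")
    case True thus ?thesis using Suc.prems by (metis not_le)
  next
    case False
    hence ab: "a \<le> b" using Suc.prems by simp
    show ?thesis
    proof (cases "f b \<le> u")
      case True thus ?thesis using ab Suc.prems by (intro exI[of _ b]) auto
    next
      case False
      then obtain r where "a \<le> r \<and> r < b \<and> f r \<le> u \<and> u < f (Suc r)" using Suc.IH[OF ab Suc.prems(2)] by (metis not_le)
      thus ?thesis by (metis less_SucI)
    qed
  qed
qed

lemma sum_split_add: "(\<Sum>j<(x::nat) + y. f (c + j)) = (\<Sum>j<x. f (c + j)) + (\<Sum>j<y. f (c + x + j) :: real)"
  by (induction y) (auto simp: add.assoc)

context alg begin

definition dl :: real where "dl = Min {t i j | i j. i < n \<and> j < n \<and> i \<noteq> j}"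

lemma dl_props: "dl > 0" "\<And>a b. a < n \<Longrightarrow> b < n \<Longrightarrow> a \<noteq> b \<Longrightarrow> dl \<le> t a b"
proof -
  have fin: "finite {t i j | i j. i < n \<and> j < n \<and> i \<noteq> j}"
  proof -
    have "{t i j | i j. i < n \<and> j < n \<and> i \<noteq> j} \<subseteq> (\<lambda>(i,j). t i j) ` ({..<n} \<times> {..<n})" by auto
    thus ?thesis by (rule finite_subset) auto
  qed
  have ne: "t 0 1 \<in> {t i j | i j. i < n \<and> j < n \<and> i \<noteq> j}" using n2 by force
  show "dl \<le> t a b" if "a < n" "b < n" "a \<noteq> b" for a b
    unfolding dl_def using that by (intro Min_le[OF fin]) auto
  from Min_in[OF fin] ne obtain a b where "a < n" "b < n" "a \<noteq> b" "dl = t a b" unfolding dl_def by blast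
  thus "dl > 0" using bgtD(4)[OF bgt] by simp
qed

definition stp :: "nat list \<Rightarrow> nat \<Rightarrow> real" where
  "stp c j = t (c ! (j mod length c)) (c ! (Suc j mod length c))"

lemma stp_mod: "a mod length c = b mod length c \<Longrightarrow> stp c a = stp c b"
  unfolding stp_def by (metis mod_Suc_eq)

lemma stp_bounds: assumes "good c" shows "dl \<le> stp c j" "stp c j \<le> D"
proof -
  let ?m = "length c"
  have m: "?m \<ge> 2" using assms unfolding good_def by simp
  have jm: "j mod ?m < ?m" using m by (intro mod_less_divisor) linarith
  have e: "Suc j mod ?m = (j mod ?m + 1) mod ?m" by (simp add: mod_Suc_eq)
  have jm2: "Suc j mod ?m < ?m" using m by (intro mod_less_divisor) linarith
  have a: "c ! (j mod ?m) < n" "c ! (Suc j mod ?m) < n" "c ! (j mod ?m) \<noteq> c ! (Suc j mod ?m)"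
    using assms jm jm2 unfolding good_def by (auto simp: mod_Suc_eq)
  show "dl \<le> stp c j" unfolding stp_def using dl_props(2)[OF a] .
  show "stp c j \<le> D" unfolding stp_def using Dmax_ge[OF a] .
qed

lemma phase_steps_eq: "phase_steps t D c p = (LEAST k. D \<le> (\<Sum>j<k. stp c (p + j)))"
  unfolding phase_steps_def stp_def by simp

abbreviation "ks c p \<equiv> phase_steps t D c p"

lemma ks_props: assumes "good c"
  shows "D \<le> (\<Sum>j<ks c p. stp c (p + j))" "(\<Sum>j<ks c p. stp c (p + j)) < 2 * D" "ks c p \<ge> 1"
proof -
  define N where "N = nat \<lceil>D / dl\<rceil>"
  have "D / dl \<le> real N" unfolding N_def by linarith
  hence "D \<le> real N * dl" using dl_props(1) by (simp add: field_simps)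
  also have "\<dots> = (\<Sum>j<N. dl)" by simp
  also have "\<dots> \<le> (\<Sum>j<N. stp c (p + j))" by (intro sum_mono stp_bounds(1)[OF assms])
  finally have ex: "D \<le> (\<Sum>j<N. stp c (p + j))" .
  show ge: "D \<le> (\<Sum>j<ks c p. stp c (p + j))" unfolding phase_steps_eq by (rule LeastI[of _ N]) (rule ex)
  show k1: "ks c p \<ge> 1"
  proof (rule ccontr)
    assume "\<not> ks c p \<ge> 1" hence "ks c p = 0" by simp
    thus False using ge D_pos by simp
  qed
  have lt: "ks c p - 1 < (LEAST k. D \<le> (\<Sum>j<k. stp c (p + j)))" using k1 unfolding phase_steps_eq by linarith
  have "\<not> D \<le> (\<Sum>j<ks c p - 1. stp c (p + j))" by (rule not_less_Least[OF lt])
  moreover have "(\<Sum>j<ks c p. stp c (p + j)) = (\<Sum>j<ks c p - 1. stp c (p + j)) + stp c (p + (ks c p - 1))"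
  proof -
    obtain k' where k': "ks c p = Suc k'" using k1 by (cases "ks c p") auto
    show ?thesis unfolding k' by simp
  qed
  moreover have "stp c (p + (ks c p - 1)) \<le> D" using stp_bounds(2)[OF assms] .
  ultimately show "(\<Sum>j<ks c p. stp c (p + j)) < 2 * D" by linarith
qed

lemma ks_mod: "ks c (p mod length c) = ks c p"
proof -
  have "\<And>j. stp c (p mod length c + j) = stp c (p + j)" by (rule stp_mod) (simp add: mod_add_left_eq)
  thus ?thesis unfolding phase_steps_eq by simp
qed

lemma phase_multi: assumes "good c"
  shows "phase t D c p = (map (\<lambda>j. c ! ((p + j) mod length c)) [0..<ks c p + 1], (p + ks c p) mod length c)"
  using assms unfolding phase_def good_def by (simp add: Let_def)

lemma rot_sum: "(\<Sum>j<length c. stp c (a + j)) = (\<Sum>j<length c. stp c j)"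
proof (induction a)
  case (Suc a)
  have A: "(\<Sum>j<Suc (length c). stp c (a + j)) = stp c a + (\<Sum>j<length c. stp c (Suc a + j))"
    by (subst sum.lessThan_Suc_shift) simp
  have B: "(\<Sum>j<Suc (length c). stp c (a + j)) = (\<Sum>j<length c. stp c (a + j)) + stp c (a + length c)" by simp
  have E: "stp c (a + length c) = stp c a" by (rule stp_mod) simp
  show ?case using A B E Suc by linarith
qed simp

lemma short_sum: assumes "good c" "b < length c"
  shows "(\<Sum>j<b. stp c (a + j)) < (\<Sum>j<length c. stp c j)"
proof -
  let ?m = "length c"
  have "(\<Sum>j<b. stp c (a + j)) \<le> (\<Sum>j<?m - 1. stp c (a + j))"
    using assms(2) stp_bounds(1)[OF assms(1)] dl_props(1)
    by (intro sum_mono2) (auto intro: order_trans[of 0 dl] less_imp_le)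
  also have "\<dots> < (\<Sum>j<?m - 1. stp c (a + j)) + stp c (a + (?m - 1))"
    using stp_bounds(1)[OF assms(1), of "a + (?m - 1)"] dl_props(1) by linarith
  also have "\<dots> = (\<Sum>j<?m. stp c (a + j))"
  proof -
    obtain m' where m': "?m = Suc m'" using assms(2) by (cases ?m) auto
    show ?thesis unfolding m' by simp
  qed
  finally show ?thesis using rot_sum by simp
qed

end

context alg begin

primrec U :: "nat \<Rightarrow> nat \<Rightarrow> nat" where
  "U i 0 = p0 i"
| "U i (Suc r) = U i r + ks (C i) (U i r)"

lemma multi_good: assumes "i \<in> {1..s}" "card (cls n h i) \<ge> 2"
  shows "good (C i)" "cls n h i \<subseteq> set (C i)" "set (C i) \<subseteq> cls n h i"
proof -
  obtain E where E: "min_spanning_tree t (cls n h i) E" "euler_tour E (C i)" using multi_class[OF assms] by blast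
  have sp: "spanning_tree (cls n h i) E" using E(1) unfolding min_spanning_tree_def by blast
  note tp = tour_props[OF sp E(2) assms(2) cls_sub]
  show "good (C i)" unfolding good_def using tp(1,2,3) cls_sub by blast
  show "cls n h i \<subseteq> set (C i)" using tp(4) .
  show "set (C i) \<subseteq> cls n h i" using tp(2) by (metis in_set_conv_nth subsetI)
qed

lemma st_U: assumes "i \<in> {1..s}" "card (cls n h i) \<ge> 2"
  shows "st r i = U i r mod length (C i)"
proof (induction r)
  have ne: "cls n h i \<noteq> {}" using assms(2) by auto
  case 0 show ?case using st_lt[OF assms(1) ne, of 0] st_0 by simp
next
  have ne: "cls n h i \<noteq> {}" using assms(2) by auto
  case (Suc r)
  have "st (Suc r) i = snd (phase t D (C i) (st r i))" using st_Suc assms ne by simp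
  also have "\<dots> = (st r i + ks (C i) (st r i)) mod length (C i)" using phase_multi[OF multi_good(1)[OF assms]] by simp
  also have "\<dots> = (U i r mod length (C i) + ks (C i) (U i r)) mod length (C i)" using Suc ks_mod by simp
  also have "\<dots> = U i (Suc r) mod length (C i)" by (simp add: mod_add_left_eq)
  finally show ?case .
qed

lemma G_multi: assumes "i \<in> {1..s}" "card (cls n h i) \<ge> 2"
  shows "G r i = map (\<lambda>j. C i ! ((U i r + j) mod length (C i))) [0..<ks (C i) (U i r) + 1]"
proof -
  have ne: "cls n h i \<noteq> {}" using assms(2) by auto
  have "G r i = fst (phase t D (C i) (st r i))" unfolding G_def using ne by simp
  also have "\<dots> = map (\<lambda>j. C i ! ((U i r mod length (C i) + j) mod length (C i))) [0..<ks (C i) (U i r) + 1]"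
    using phase_multi[OF multi_good(1)[OF assms]] st_U[OF assms] ks_mod by simp
  also have "\<dots> = map (\<lambda>j. C i ! ((U i r + j) mod length (C i))) [0..<ks (C i) (U i r) + 1]"
    by (simp add: mod_add_left_eq)
  finally show ?thesis .
qed

lemma G_single: assumes "i \<in> {1..s}" "cls n h i \<noteq> {}" "card (cls n h i) = 1"
  shows "G r i = [the_elem (cls n h i)]"
proof -
  have "st r i < 1" using st_lt[OF assms(1,2)] single_class(1)[OF assms] by simp
  thus ?thesis unfolding G_def phase_def using assms single_class(1)[OF assms] by simp
qed

lemma U_mono: "U i r \<le> U i (r + a)"
  by (induction a) (auto simp: le_trans)

lemma U_sum: assumes "good (C i)"
  shows "real a * D \<le> (\<Sum>j < U i (r + a) - U i r. stp (C i) (U i r + j))"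
proof (induction a)
  case (Suc a)
  have e: "U i (r + Suc a) - U i r = (U i (r + a) - U i r) + ks (C i) (U i (r + a))"
    using U_mono[of i r a] by simp
  have "(\<Sum>j < U i (r + Suc a) - U i r. stp (C i) (U i r + j))
     = (\<Sum>j < U i (r + a) - U i r. stp (C i) (U i r + j)) + (\<Sum>j < ks (C i) (U i (r + a)). stp (C i) (U i r + (U i (r + a) - U i r) + j))"
    unfolding e by (rule sum_split_add)
  also have "U i r + (U i (r + a) - U i r) = U i (r + a)" using U_mono[of i r a] by simp
  finally show ?case using Suc ks_props(1)[OF assms, of "U i (r + a)"] by (simp add: algebra_simps)
qed simp

definition Lc :: "nat list \<Rightarrow> real" where "Lc c = (\<Sum>j<length c. stp c j)"
definition R0 :: "nat list \<Rightarrow> nat" where "R0 c = nat \<lceil>Lc c / D\<rceil>"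

lemma Lc_pos: "good c \<Longrightarrow> Lc c > 0"
proof -
  assume g: "good c"
  hence "0 < length c" unfolding good_def by linarith
  thus ?thesis unfolding Lc_def using short_sum[OF g, of 0 0] by simp
qed

lemma R0_props: assumes "good c" shows "R0 c \<ge> 1" "Lc c \<le> real (R0 c) * D" "real (R0 c) \<le> Lc c / D + 1"
proof -
  have "Lc c / D > 0" using Lc_pos[OF assms] D_pos by simp
  thus "R0 c \<ge> 1" unfolding R0_def by linarith
  have "Lc c / D \<le> real (R0 c)" unfolding R0_def by linarith
  thus "Lc c \<le> real (R0 c) * D" using D_pos by (simp add: field_simps)
  show "real (R0 c) \<le> Lc c / D + 1" unfolding R0_def using \<open>Lc c / D > 0\<close> by linarith
qed

lemma U_adv: assumes "good (C i)" shows "U i r + length (C i) \<le> U i (r + R0 (C i))"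
proof (rule ccontr)
  assume "\<not> ?thesis"
  moreover have "length (C i) \<ge> 2" using assms unfolding good_def by simp
  ultimately have lt: "U i (r + R0 (C i)) - U i r < length (C i)" by arith
  have "real (R0 (C i)) * D \<le> (\<Sum>j < U i (r + R0 (C i)) - U i r. stp (C i) (U i r + j))" by (rule U_sum[OF assms])
  also have "\<dots> < Lc (C i)" unfolding Lc_def by (rule short_sum[OF assms lt])
  finally show False using R0_props(2)[OF assms] by linarith
qed

lemma cover_multi: assumes "i \<in> {1..s}" "card (cls n h i) \<ge> 2" "z \<in> cls n h i"
  shows "\<exists>r' j. r \<le> r' \<and> r' < r + R0 (C i) \<and> j < length (G r' i) \<and> G r' i ! j = z"
proof -
  let ?c = "C i" let ?m = "length (C i)"
  have g: "good ?c" using multi_good(1)[OF assms(1,2)] .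
  have m2: "?m \<ge> 2" using g unfolding good_def by simp
  obtain q where q: "q < ?m" "?c ! q = z" using multi_good(2)[OF assms(1,2)] assms(3) by (metis in_set_conv_nth subsetD)
  define b where "b = U i r mod ?m"
  define a where "a = U i r div ?m"
  have Ur: "U i r = a * ?m + b" unfolding a_def b_def by simp
  have bm: "b < ?m" unfolding b_def using m2 by (intro mod_less_divisor) linarith
  define u where "u = (if b \<le> q then q + a * ?m else q + (a + 1) * ?m)"
  have u1: "U i r \<le> u" "u < U i r + ?m" using Ur bm q(1) unfolding u_def by auto
  have u2: "u mod ?m = q" unfolding u_def using q(1) by (simp only: mod_mult_self1 split: if_split) simp
  have "u < U i (r + R0 ?c)" using u1 U_adv[OF g, of r] by linarith
  then obtain r' where r': "r \<le> r'" "r' < r + R0 ?c" "U i r' \<le> u" "u < U i (Suc r')"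
    using find_step[of r "r + R0 ?c" "U i" u] u1 by auto
  define j where "j = u - U i r'"
  have jk: "j < ks ?c (U i r') + 1" using r' unfolding j_def by simp
  have "G r' i ! j = ?c ! ((U i r' + j) mod ?m)" using G_multi[OF assms(1,2)] jk by (simp del: upt_Suc)
  also have "U i r' + j = u" unfolding j_def using r' by simp
  finally have "G r' i ! j = z" using u2 q by simp
  moreover have "j < length (G r' i)" using G_multi[OF assms(1,2)] jk by (simp del: upt_Suc)
  ultimately show ?thesis using r' by blast
qed

end

lemma minmax_eq: "(a::nat) < b \<Longrightarrow> ((min x y, max x y) = (a, b)) = ({x, y} = {a, b})"
  by (auto simp: doubleton_eq_iff min_def max_def)

context alg begin

lemma Lc_tree: assumes sp: "spanning_tree V E" and et: "euler_tour E c" and V: "V \<subseteq> {..<n}" "card V \<ge> 2"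
  shows "Lc c = 2 * tree_weight t E"
proof -
  let ?m = "length c"
  have Esub: "E \<subseteq> {(a, b). a \<in> V \<and> b \<in> V \<and> a < b}" using sp unfolding spanning_tree_def by auto
  have finE: "finite E"
  proof -
    have "finite V" using sp unfolding spanning_tree_def by auto
    hence "finite (V \<times> V)" by simp
    moreover have "E \<subseteq> V \<times> V" using Esub by auto
    ultimately show ?thesis using finite_subset by blast
  qed
  have m2: "?m \<ge> 2" using tour_props(1)[OF sp et V(2,1)] .
  define g where "g k = (min (c ! k) (c ! ((k + 1) mod ?m)), max (c ! k) (c ! ((k + 1) mod ?m)))" for k
  have adjk: "\<And>k. k < ?m \<Longrightarrow> adj E (c ! k) (c ! ((k + 1) mod ?m))"
    using et unfolding euler_tour_def by blast
  have gE: "g ` {..<?m} \<subseteq> E"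
  proof
    fix e assume "e \<in> g ` {..<?m}"
    then obtain k where k: "k < ?m" "e = g k" by auto
    have "(c ! k, c ! ((k + 1) mod ?m)) \<in> E \<or> (c ! ((k + 1) mod ?m), c ! k) \<in> E" using adjk[OF k(1)] unfolding adj_def .
    thus "e \<in> E" using Esub k(2) unfolding g_def by (auto simp: min_def max_def)
  qed
  have "Lc c = (\<Sum>k<?m. stp c k)" unfolding Lc_def ..
  also have "\<dots> = (\<Sum>e\<in>E. \<Sum>k\<in>{k \<in> {..<?m}. g k = e}. stp c k)"
    by (rule sum.group[symmetric, OF _ finE gE]) simp
  also have "\<dots> = (\<Sum>e\<in>E. 2 * t (fst e) (snd e))"
  proof (rule sum.cong[OF refl])
    fix e assume e: "e \<in> E"
    have "fst e \<in> V \<and> snd e \<in> V \<and> fst e < snd e" using e Esub by auto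
    hence ab: "fst e < snd e" "fst e < n" "snd e < n" using V(1) by auto
    have fib: "{k \<in> {..<?m}. g k = e} = {k. k < ?m \<and> {c ! k, c ! ((k + 1) mod ?m)} = {fst e, snd e}}"
      unfolding g_def using minmax_eq[OF ab(1)] by (metis (no_types, lifting) lessThan_iff prod.collapse)
    have card2: "card {k. k < ?m \<and> {c ! k, c ! ((k + 1) mod ?m)} = {fst e, snd e}} = 2"
      using et e unfolding euler_tour_def by blast
    have "\<And>k. k \<in> {k \<in> {..<?m}. g k = e} \<Longrightarrow> stp c k = t (fst e) (snd e)"
    proof -
      fix k assume "k \<in> {k \<in> {..<?m}. g k = e}"
      hence k: "k < ?m" "{c ! k, c ! ((k + 1) mod ?m)} = {fst e, snd e}" using fib by auto
      have "stp c k = t (c ! k) (c ! ((k + 1) mod ?m))" unfolding stp_def using k(1) by simp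
      also have "\<dots> = t (fst e) (snd e)"
        using k(2) bgtD(5)[OF bgt, of "fst e" "snd e"] ab unfolding doubleton_eq_iff by auto
      finally show "stp c k = t (fst e) (snd e)" .
    qed
    hence "(\<Sum>k\<in>{k \<in> {..<?m}. g k = e}. stp c k) = (\<Sum>k\<in>{k \<in> {..<?m}. g k = e}. t (fst e) (snd e))"
      by (rule sum.cong[OF refl])
    also have "\<dots> = 2 * t (fst e) (snd e)" using card2 fib by simp
    finally show "(\<Sum>k\<in>{k \<in> {..<?m}. g k = e}. stp c k) = 2 * t (fst e) (snd e)" .
  qed
  also have "\<dots> = 2 * tree_weight t E" unfolding tree_weight_def by (simp add: sum_distrib_left case_prod_beta)
  finally show ?thesis .
qed

end

context alg begin

lemma card_cases: "cls n h i \<noteq> {} \<Longrightarrow> card (cls n h i) = 1 \<or> card (cls n h i) \<ge> 2"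
  using cls_fin[of i] by (metis One_nat_def card_0_eq less_2_cases not_le)

lemma G_set: assumes "i \<in> {1..s}" shows "set (G r i) \<subseteq> cls n h i"
proof (cases "cls n h i = {}")
  case True thus ?thesis unfolding G_def by simp
next
  case False
  show ?thesis
  proof (cases "card (cls n h i) = 1")
    case True thus ?thesis using G_single[OF assms False True] single_class[OF assms False True] by simp
  next
    case F2: False
    hence c2: "card (cls n h i) \<ge> 2" using card_cases[OF False] by simp
    have g: "good (C i)" using multi_good(1)[OF assms c2] .
    have "\<And>x. (x::nat) mod length (C i) < length (C i)" using g unfolding good_def by (intro mod_less_divisor) linarith
    hence "set (G r i) \<subseteq> set (C i)" unfolding G_multi[OF assms c2] by auto
    thus ?thesis using multi_good(3)[OF assms c2] by blast
  qed
qed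

lemma G_ne: assumes "i \<in> {1..s}" "cls n h i \<noteq> {}" shows "G r i \<noteq> []"
proof (cases "card (cls n h i) = 1")
  case True thus ?thesis using G_single[OF assms True] by simp
next
  case False
  hence c2: "card (cls n h i) \<ge> 2" using card_cases[OF assms(2)] by simp
  show ?thesis unfolding G_multi[OF assms(1) c2] by simp
qed

lemma G_sub_R: "i \<in> {1..s} \<Longrightarrow> set (G r i) \<subseteq> set (R r)"
proof -
  assume "i \<in> {1..s}"
  hence "i \<in> set [1..<s+1]" by (simp only: set_upt) auto
  thus ?thesis unfolding R_eq by (auto simp del: upt_Suc)
qed

lemma R_lt: "x \<in> set (R r) \<Longrightarrow> x < n"
proof -
  assume "x \<in> set (R r)"
  then obtain i where "i \<in> set [1..<s+1]" "x \<in> set (G r i)" unfolding R_eq by (auto simp del: upt_Suc)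
  hence "i \<in> {1..s}" "x \<in> set (G r i)" by auto
  thus ?thesis using G_set cls_sub by blast
qed

lemma R_ne: "R r \<noteq> []"
proof -
  have i: "cls_of 0 \<in> {1..s}" "0 \<in> cls n h (cls_of 0)" using cls_of n2 by auto
  hence "G r (cls_of 0) \<noteq> []" using G_ne by blast
  thus ?thesis using G_sub_R[OF i(1), of r] by auto
qed

lemma R_two: "\<exists>x y. x \<in> set (R r) \<and> y \<in> set (R r) \<and> x \<noteq> y"
proof (cases "\<exists>i\<in>{1..s}. card (cls n h i) \<ge> 2")
  case True
  then obtain i where i: "i \<in> {1..s}" "card (cls n h i) \<ge> 2" by blast
  let ?c = "C i" let ?m = "length (C i)" let ?u = "U i r"
  have g: "good ?c" using multi_good(1)[OF i] .
  have k1: "ks ?c ?u \<ge> 1" using ks_props(3)[OF g] .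
  have l: "1 < length (G r i)" "0 < length (G r i)" using k1 by (simp_all add: G_multi[OF i] del: upt_Suc)
  have "G r i ! 1 = ?c ! ((?u + 1) mod ?m)" "G r i ! 0 = ?c ! (?u mod ?m)"
    using k1 by (simp_all add: G_multi[OF i] del: upt_Suc)
  hence "?c ! (?u mod ?m) \<in> set (G r i)" "?c ! ((?u + 1) mod ?m) \<in> set (G r i)" using l by (metis nth_mem)+
  moreover have "?c ! (?u mod ?m) \<noteq> ?c ! ((?u + 1) mod ?m)"
  proof -
    have "?u mod ?m < ?m" using g unfolding good_def by (intro mod_less_divisor) linarith
    hence "?c ! (?u mod ?m) \<noteq> ?c ! ((?u mod ?m + 1) mod ?m)" using g unfolding good_def by blast
    thus ?thesis by (simp add: mod_Suc_eq)
  qed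
  ultimately show ?thesis using G_sub_R[OF i(1), of r] by blast
next
  case False
  have i0: "cls_of 0 \<in> {1..s}" "0 \<in> cls n h (cls_of 0)" using cls_of n2 by auto
  have i1: "cls_of (n-1) \<in> {1..s}" "n - 1 \<in> cls n h (cls_of (n-1))" using cls_of n2 by auto
  have c0: "card (cls n h (cls_of 0)) = 1" using False i0 card_cases by fastforce
  have c1: "card (cls n h (cls_of (n-1))) = 1" using False i1 card_cases by fastforce
  have "G r (cls_of 0) = [the_elem (cls n h (cls_of 0))]" using G_single[OF i0(1) _ c0] i0 by blast
  moreover have "the_elem (cls n h (cls_of 0)) = 0" using single_class(3)[OF i0(1) _ c0] i0 by (metis empty_iff singletonD)
  ultimately have a: "0 \<in> set (R r)" using G_sub_R[OF i0(1), of r] by auto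
  have "G r (cls_of (n-1)) = [the_elem (cls n h (cls_of (n-1)))]" using G_single[OF i1(1) _ c1] i1 by blast
  moreover have "the_elem (cls n h (cls_of (n-1))) = n - 1" using single_class(3)[OF i1(1) _ c1] i1 by (metis empty_iff singletonD)
  ultimately have b: "n - 1 \<in> set (R r)" using G_sub_R[OF i1(1), of r] by auto
  show ?thesis using a b n2 by (intro exI[of _ 0] exI[of _ "n-1"]) auto
qed

end

definition pl :: "(nat \<Rightarrow> nat \<Rightarrow> real) \<Rightarrow> nat list \<Rightarrow> real" where
  "pl t l = (\<Sum>j < length l - 1. tt t (l ! j) (l ! (j + 1)))"

lemma concat_time: assumes bgt: "bgt_instance n h t" and n2: "n \<ge> 2" and wl: "\<forall>k. w k < n"
  shows "(\<forall>j<length (concat ls). w (a + j) = concat ls ! j) \<Longrightarrow>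
    walk_time t w (a + length (concat ls)) - walk_time t w a \<le> (\<Sum>l\<leftarrow>ls. if l = [] then 0 else pl t l + Dmax n t)"
proof (induction ls arbitrary: a)
  case Nil thus ?case by simp
next
  case (Cons l ls)
  let ?L = "length l"
  have rest: "\<forall>j<length (concat ls). w (a + ?L + j) = concat ls ! j"
    using Cons.prems by (auto simp: nth_append add.assoc)
  have IH: "walk_time t w (a + ?L + length (concat ls)) - walk_time t w (a + ?L) \<le> (\<Sum>l\<leftarrow>ls. if l = [] then 0 else pl t l + Dmax n t)"
    using Cons.IH[OF rest] .
  show ?case
  proof (cases "l = []")
    case True thus ?thesis using IH by simp
  next
    case False
    then obtain L' where L': "?L = Suc L'" by (cases l) auto
    have inl: "\<And>j. j < ?L \<Longrightarrow> w (a + j) = l ! j" using Cons.prems by (auto simp: nth_append)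
    have "walk_time t w (a + ?L) - walk_time t w a = (\<Sum>j<?L. tt t (w (a + j)) (w (a + j + 1)))"
      by (rule walk_time_diff)
    also have "\<dots> = (\<Sum>j<L'. tt t (w (a + j)) (w (a + j + 1))) + tt t (w (a + L')) (w (a + L' + 1))"
      unfolding L' by simp
    also have "(\<Sum>j<L'. tt t (w (a + j)) (w (a + j + 1))) = pl t l"
      unfolding pl_def L'
    proof (rule sum.cong)
      show "{..<L'} = {..<Suc L' - 1}" by simp
    next
      fix j assume "j \<in> {..<Suc L' - 1}"
      hence jl: "j < L'" by simp
      have e1: "w (a + j) = l ! j" using inl[of j] jl L' by simp
      have e2: "w (a + (j + 1)) = l ! (j + 1)" using inl[of "j + 1"] jl L' by simp
      show "tt t (w (a + j)) (w (a + j + 1)) = tt t (l ! j) (l ! (j + 1))" using e1 e2 by (simp add: add.assoc)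
    qed
    also have "tt t (w (a + L')) (w (a + L' + 1)) \<le> Dmax n t" using tt_le_D[OF _ _ n2 bgt] wl by blast
    finally have "walk_time t w (a + ?L) - walk_time t w a \<le> pl t l + Dmax n t" by simp
    thus ?thesis using IH False by (simp add: add.assoc)
  qed
qed

lemma sum_list_bound: "(\<forall>x\<in>set xs. f x \<le> (B::real)) \<Longrightarrow> (\<Sum>x\<leftarrow>xs. f x) \<le> real (length xs) * B"
  by (induction xs) (auto simp: algebra_simps)

context alg begin

abbreviation "Wa \<equiv> alg_walk n h t C p0"
abbreviation "Ta \<equiv> walk_time t Wa"
abbreviation "fp r \<equiv> flat_prefix (alg_round_list n h t C p0) r"

lemma fp_Suc: "fp (Suc r) = fp r + length (R r)"
  unfolding flat_prefix_def by simp

lemma fp_mono: "r \<le> r' \<Longrightarrow> fp r \<le> fp r'"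
  unfolding flat_prefix_def by (rule sum_mono2) auto

lemma fp_ge: "r \<le> fp r"
proof (induction r)
  case (Suc r)
  have "length (R r) \<ge> 1" using R_ne[of r] by (cases "R r") auto
  thus ?case using fp_Suc[of r] Suc by linarith
qed (simp add: flat_prefix_def)

lemma flat_nth: assumes "j < length (R r)"
  shows "flat (alg_round_list n h t C p0) (fp r + j) = R r ! j"
proof -
  have "(LEAST r'. fp r + j < fp (Suc r')) = r"
  proof (rule Least_equality)
    show "fp r + j < fp (Suc r)" using assms fp_Suc by simp
    fix r' assume a: "fp r + j < fp (Suc r')"
    show "r \<le> r'"
    proof (rule ccontr)
      assume "\<not> r \<le> r'" hence "Suc r' \<le> r" by simp
      thus False using fp_mono[of "Suc r'" r] a by simp
    qed
  qed
  thus ?thesis unfolding flat_def by simp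
qed

lemma W_S: "j < length (R r) \<Longrightarrow> Wa (1 + fp r + j) = R r ! j"
  unfolding alg_walk_def using flat_nth by simp

lemma W_lt: "Wa k < n"
proof (cases "k = 0")
  case True thus ?thesis unfolding alg_walk_def using n2 by simp
next
  case False
  have "fp 0 \<le> k - 1" by (simp add: flat_prefix_def)
  moreover have "k - 1 < fp (Suc (k - 1))" using fp_ge[of "Suc (k-1)"] by simp
  ultimately obtain r where r: "fp r \<le> k - 1" "k - 1 < fp (Suc r)"
    using find_step[of 0 "Suc (k - 1)" fp "k - 1"] by auto
  define j where "j = k - 1 - fp r"
  have j: "j < length (R r)" "k = 1 + fp r + j" using r fp_Suc False unfolding j_def by auto
  show ?thesis using W_S[OF j(1)] j(2) R_lt nth_mem[OF j(1)] by metis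
qed

lemma Wl: "\<forall>k. Wa k < n" using W_lt by blast

lemma Ta_mono: "k \<le> k' \<Longrightarrow> Ta k \<le> Ta k'"
  using walk_time_mono[OF bgt Wl] .

definition rho :: "nat \<Rightarrow> real" where "rho r = Ta (1 + fp r)"

lemma rho_0: "rho 0 \<le> D"
proof -
  have "rho 0 = tt t (Wa 0) (Wa 1)" unfolding rho_def flat_prefix_def walk_time_def by simp
  thus ?thesis using tt_le_D[OF W_lt W_lt n2 bgt] by simp
qed

lemma rho_nonneg: "0 \<le> rho r" unfolding rho_def using walk_time_nonneg[OF bgt Wl] .

lemma in_round_time: "j < length (R r) \<Longrightarrow> rho r \<le> Ta (1 + fp r + j) \<and> Ta (1 + fp r + j) \<le> rho (Suc r)"
  unfolding rho_def using Ta_mono fp_Suc by simp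

lemma good_step: assumes "good c"
  shows "c ! (x mod length c) \<noteq> c ! (Suc x mod length c)" "c ! (x mod length c) < n" "c ! (Suc x mod length c) < n"
proof -
  let ?m = "length c"
  have m: "?m \<ge> 2" using assms unfolding good_def by simp
  have jm: "x mod ?m < ?m" "Suc x mod ?m < ?m" using m by (intro mod_less_divisor, linarith)+
  show "c ! (x mod length c) \<noteq> c ! (Suc x mod length c)" "c ! (x mod length c) < n" "c ! (Suc x mod length c) < n"
    using assms jm unfolding good_def by (auto simp: mod_Suc_eq)
qed

lemma pl_G: assumes "i \<in> {1..s}" shows "pl t (G r i) \<le> 2 * D"
proof (cases "cls n h i = {}")
  case True thus ?thesis unfolding G_def pl_def using D_pos by simp
next
  case False
  show ?thesis
  proof (cases "card (cls n h i) = 1")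
    case True thus ?thesis using G_single[OF assms False True] D_pos by (simp add: pl_def)
  next
    case F2: False
    hence c2: "card (cls n h i) \<ge> 2" using card_cases[OF False] by simp
    let ?c = "C i" let ?u = "U i r" let ?m = "length (C i)"
    have g: "good ?c" using multi_good(1)[OF assms c2] .
    have "pl t (G r i) = (\<Sum>j<ks ?c ?u. tt t (?c ! ((?u + j) mod ?m)) (?c ! ((?u + (j + 1)) mod ?m)))"
      unfolding pl_def G_multi[OF assms c2] by (intro sum.cong) (simp_all del: upt_Suc)
    also have "\<dots> = (\<Sum>j<ks ?c ?u. stp ?c (?u + j))"
    proof (intro sum.cong refl)
      fix j
      show "tt t (?c ! ((?u + j) mod ?m)) (?c ! ((?u + (j + 1)) mod ?m)) = stp ?c (?u + j)"
        using good_step(1)[OF g, of "?u + j"] unfolding tt_def stp_def by simp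
    qed
    also have "\<dots> < 2 * D" using ks_props(2)[OF g] .
    finally show ?thesis by simp
  qed
qed

lemma round_upper: "rho (Suc r) - rho r \<le> 3 * D * real s"
proof -
  have idx: "\<forall>j<length (concat (map (G r) [1..<s+1])). Wa (1 + fp r + j) = concat (map (G r) [1..<s+1]) ! j"
    using W_S R_eq by simp
  have "rho (Suc r) - rho r = Ta (1 + fp r + length (concat (map (G r) [1..<s+1]))) - Ta (1 + fp r)"
    unfolding rho_def fp_Suc R_eq by (simp add: add.assoc)
  also have "\<dots> \<le> (\<Sum>l\<leftarrow>map (G r) [1..<s+1]. if l = [] then 0 else pl t l + D)"
    by (rule concat_time[OF bgt n2 Wl idx])
  also have "\<dots> = (\<Sum>i\<leftarrow>[1..<s+1]. if G r i = [] then 0 else pl t (G r i) + D)"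
    by (simp add: comp_def)
  also have "\<dots> \<le> real (length [1..<s+1]) * (3 * D)"
  proof (rule sum_list_bound, intro ballI)
    fix i assume "i \<in> set [1..<s+1]"
    hence "i \<in> {1..s}" by auto
    thus "(if G r i = [] then 0 else pl t (G r i) + D) \<le> 3 * D" using pl_G D_pos by auto
  qed
  finally have "rho (Suc r) - rho r \<le> real (length [1..<s+1]) * (3 * D)" .
  moreover have "length [1..<s+1] = s" by (simp del: upt_Suc)
  ultimately show ?thesis by (simp del: upt_Suc add: ac_simps)
qed

lemma round_lower: "dl \<le> rho (Suc r) - rho r"
proof -
  obtain x y where xy: "x \<in> set (R r)" "y \<in> set (R r)" "x \<noteq> y" using R_two by blast
  obtain jx jy where j: "jx < length (R r)" "R r ! jx = x" "jy < length (R r)" "R r ! jy = y"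
    using xy by (metis in_set_conv_nth)
  define a where "a = min jx jy" define b where "b = max jx jy"
  have ab: "a < length (R r)" "b < length (R r)" "a \<le> b" using j unfolding a_def b_def by auto
  have d: "Wa (1 + fp r + a) \<noteq> Wa (1 + fp r + b)"
    using W_S j xy unfolding a_def b_def by (cases "jx \<le> jy") auto
  have "tt t (Wa (1 + fp r + a)) (Wa (1 + fp r + b)) \<le> Ta (1 + fp r + b) - Ta (1 + fp r + a)"
    using walk_seg[OF bgt Wl] ab by simp
  moreover have "dl \<le> tt t (Wa (1 + fp r + a)) (Wa (1 + fp r + b))"
    using dl_props(2)[OF W_lt W_lt d] d unfolding tt_def by simp
  moreover have "rho r \<le> Ta (1 + fp r + a)" "Ta (1 + fp r + b) \<le> rho (Suc r)" using in_round_time ab by auto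
  ultimately show ?thesis by linarith
qed

end

context alg begin

lemma rho_mono: "a \<le> b \<Longrightarrow> rho a \<le> rho b"
proof (induction b)
  case (Suc b)
  show ?case
  proof (cases "a = Suc b")
    case False thus ?thesis using Suc round_lower[of b] dl_props(1) by simp
  qed simp
qed simp

lemma rho_diff: "a \<le> b \<Longrightarrow> rho b - rho a \<le> real (b - a) * (3 * D * real s)"
proof (induction b)
  case (Suc b)
  show ?case
  proof (cases "a = Suc b")
    case False
    hence ab: "a \<le> b" using Suc by simp
    have "real (Suc b - a) = real (b - a) + 1" using ab by simp
    thus ?thesis using Suc.IH[OF ab] round_upper[of b] by (simp add: algebra_simps)
  qed simp
qed simp

lemma rho_lower: "real r * dl \<le> rho r"
proof (induction r)
  case 0 thus ?case using rho_nonneg by simp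
next
  case (Suc r) thus ?case using round_lower[of r] by (simp add: algebra_simps)
qed

lemma gap: assumes Rz: "Rz \<ge> 1" and cov: "\<And>r. \<exists>r'. r \<le> r' \<and> r' < r + Rz \<and> z \<in> set (R r')"
  and tau: "0 \<le> \<tau>"
  shows "\<tau> - last_cut Wa Ta z \<tau> \<le> D + 3 * D * real s * (real Rz + 1)"
proof -
  define Q where "Q = 3 * D * real s"
  have Q0: "0 \<le> Q" unfolding Q_def using D_pos by simp
  show ?thesis
  proof (cases "\<tau> < rho Rz")
    case True
    have "rho Rz \<le> rho 0 + real Rz * Q" using rho_diff[of 0 Rz] unfolding Q_def by simp
    hence "\<tau> \<le> D + real Rz * Q" using True rho_0 by linarith
    moreover have "0 \<le> last_cut Wa Ta z \<tau>" by (rule last_cut_ge0)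
    ultimately show ?thesis using Q0 unfolding Q_def[symmetric] by (simp add: algebra_simps)
  next
    case False
    define b where "b = nat \<lceil>\<tau> / dl\<rceil> + 1"
    have "\<tau> / dl < real b" unfolding b_def by linarith
    hence "\<tau> < real b * dl" using dl_props(1) by (simp add: field_simps)
    hence tb: "\<tau> < rho b" using rho_lower[of b] by linarith
    have Rb: "Rz \<le> b"
    proof (rule ccontr)
      assume "\<not> Rz \<le> b" thus False using rho_mono[of b Rz] tb False by simp
    qed
    obtain r' where r': "Rz \<le> r'" "r' < b" "rho r' \<le> \<tau>" "\<tau> < rho (Suc r')"
      using find_step[OF Rb, of rho \<tau>] False tb by auto
    obtain r'' where r'': "r' - Rz \<le> r''" "r'' < r' - Rz + Rz" "z \<in> set (R r'')" using cov[of "r' - Rz"] by blast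
    obtain jj where jj: "jj < length (R r'')" "R r'' ! jj = z" using r''(3) by (metis in_set_conv_nth)
    define v where "v = Ta (1 + fp r'' + jj)"
    have wv: "Wa (1 + fp r'' + jj) = z" using W_S[OF jj(1)] jj(2) by simp
    have vb: "rho r'' \<le> v" "v \<le> rho (Suc r'')" using in_round_time[OF jj(1)] unfolding v_def by auto
    have "Suc r'' \<le> r'" using r''(2) r'(1) by simp
    hence "v \<le> \<tau>" using vb rho_mono[of "Suc r''" r'] r'(3) by linarith
    hence "v \<le> last_cut Wa Ta z \<tau>" using last_cut_ge[of Wa _ z Ta \<tau>] wv unfolding v_def by blast
    moreover have "r'' \<le> Suc r'" using r''(2) r'(1) by simp
    hence "rho (Suc r') - rho r'' \<le> real (Suc r' - r'') * Q" using rho_diff[of r'' "Suc r'"] unfolding Q_def by blast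
    moreover have "real (Suc r' - r'') \<le> real Rz + 1" using r'' r'(1) by simp
    ultimately have "\<tau> - last_cut Wa Ta z \<tau> \<le> (real Rz + 1) * Q"
      using vb r'(4) Q0 by (smt (verit, best) mult_right_mono)
    thus ?thesis using D_pos unfolding Q_def by (simp add: algebra_simps)
  qed
qed

end

context alg begin

lemma s_ge1: "real s \<ge> 1" unfolding num_classes_def by simp

lemma height_gap: "h z > 0 \<Longrightarrow> 0 \<le> \<tau> \<Longrightarrow> \<tau> - last_cut Wa Ta z \<tau> \<le> B \<Longrightarrow> height h Wa Ta z \<tau> \<le> h z * B"
  unfolding height_def by (simp add: mult_left_mono)

lemma z_bound: assumes z: "z < n"
  shows "\<exists>X. ereal X \<le> OPT n h t \<and> 0 \<le> X \<and> (\<forall>\<tau>\<ge>0. height h Wa Ta z \<tau> \<le> 62 * real s * X)"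
proof -
  define i where "i = cls_of z"
  have i: "i \<in> {1..s}" "z \<in> cls n h i" using cls_of[OF z] unfolding i_def by auto
  have ne: "cls n h i \<noteq> {}" using i by auto
  have hz: "h z > 0" using bgtD(2)[OF bgt z] .
  define X1 where "X1 = h z * D / 2"
  have X1: "ereal X1 \<le> OPT n h t" "0 \<le> X1" unfolding X1_def using OPT_ge1[OF bgt n2 z] hz D_pos by auto
  have s1: "real s \<ge> 1" by (rule s_ge1)
  show ?thesis
  proof (cases "card (cls n h i) = 1")
    case True
    have "the_elem (cls n h i) = z" using single_class(3)[OF i(1) ne True] i(2) by (metis singletonD)
    hence G1: "\<And>r. G r i = [z]" using G_single[OF i(1) ne True] by simp
    have cov: "\<And>r. \<exists>r'. r \<le> r' \<and> r' < r + 1 \<and> z \<in> set (R r')"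
      using G_sub_R[OF i(1)] G1 by (metis less_add_one list.set_intros(1) order_refl subsetD)
    have "\<forall>\<tau>\<ge>0. height h Wa Ta z \<tau> \<le> 62 * real s * X1"
    proof (intro allI impI)
      fix \<tau> :: real assume tau: "0 \<le> \<tau>"
      have "\<tau> - last_cut Wa Ta z \<tau> \<le> D + 3 * D * real s * (real 1 + 1)" using gap[OF _ cov tau] by simp
      also have "\<dots> \<le> 7 * real s * D" using s1 D_pos by (simp add: algebra_simps)
      finally have "height h Wa Ta z \<tau> \<le> h z * (7 * real s * D)" using height_gap[OF hz tau] by blast
      also have "\<dots> = 14 * real s * X1" unfolding X1_def by (simp add: algebra_simps)
      also have "\<dots> \<le> 62 * real s * X1" using X1(2) s1 by (simp add: mult_right_mono)
      finally show "height h Wa Ta z \<tau> \<le> 62 * real s * X1" .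
    qed
    thus ?thesis using X1 by blast
  next
    case False
    hence c2: "card (cls n h i) \<ge> 2" using card_cases[OF ne] by simp
    obtain E where E: "min_spanning_tree t (cls n h i) E" "euler_tour E (C i)" using multi_class[OF i(1) c2] by blast
    have sp: "spanning_tree (cls n h i) E" using E(1) unfolding min_spanning_tree_def by blast
    define w where "w = tree_weight t E"
    have g: "good (C i)" using multi_good(1)[OF i(1) c2] .
    have Lw: "Lc (C i) = 2 * w" unfolding w_def using Lc_tree[OF sp E(2) cls_sub c2] .
    have w0: "0 \<le> w" using Lc_pos[OF g] Lw by simp
    define hl where "hl = 2 ^ (i - 1) * hm"
    have hl0: "hl > 0" unfolding hl_def using hm_pos by simp
    have hlz: "\<forall>y\<in>cls n h i. hl \<le> h y" unfolding hl_def using cls_bounds by blast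
    have hz2: "h z \<le> 2 * hl"
    proof -
      have "h z < 2 ^ i * hm" using cls_bounds[OF i(2)] by blast
      moreover have "(2::real) ^ i = 2 * 2 ^ (i - 1)" using i(1) by (cases i) auto
      ultimately show ?thesis unfolding hl_def by simp
    qed
    define X2 where "X2 = hl * w / 2"
    have X2: "ereal X2 \<le> OPT n h t" "0 \<le> X2"
      unfolding X2_def w_def using OPT_ge2[OF bgt n2 cls_sub c2 E(1) hl0 hlz] hl0 w0 w_def by auto
    define Rz where "Rz = R0 (C i)"
    have Rz: "Rz \<ge> 1" "real Rz \<le> Lc (C i) / D + 1" using R0_props[OF g] unfolding Rz_def by auto
    have RzD: "real Rz * D \<le> 2 * w + D"
    proof -
      have "real Rz * D \<le> (Lc (C i) / D + 1) * D" using Rz(2) D_pos by (simp add: mult_right_mono)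
      also have "\<dots> = 2 * w + D" using D_pos Lw by (simp add: field_simps)
      finally show ?thesis .
    qed
    have cov: "\<And>r. \<exists>r'. r \<le> r' \<and> r' < r + Rz \<and> z \<in> set (R r')"
    proof -
      fix r
      obtain r' j where "r \<le> r'" "r' < r + Rz" "j < length (G r' i)" "G r' i ! j = z"
        using cover_multi[OF i(1) c2 i(2), of r] unfolding Rz_def by blast
      thus "\<exists>r'. r \<le> r' \<and> r' < r + Rz \<and> z \<in> set (R r')" using G_sub_R[OF i(1)] by (metis nth_mem subsetD)
    qed
    define X where "X = max X1 X2"
    have "\<forall>\<tau>\<ge>0. height h Wa Ta z \<tau> \<le> 62 * real s * X"
    proof (intro allI impI)
      fix \<tau> :: real assume tau: "0 \<le> \<tau>"
      have "\<tau> - last_cut Wa Ta z \<tau> \<le> D + 3 * D * real s * (real Rz + 1)" using gap[OF Rz(1) cov tau] .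
      also have "\<dots> = D + 3 * real s * (real Rz * D) + 3 * real s * D" by (simp add: algebra_simps)
      also have "\<dots> \<le> D + 3 * real s * (2 * w + D) + 3 * real s * D" using RzD s1 by simp
      also have "\<dots> \<le> 7 * real s * D + 6 * real s * w" using s1 D_pos by (simp add: algebra_simps)
      finally have H: "height h Wa Ta z \<tau> \<le> h z * (7 * real s * D + 6 * real s * w)" using height_gap[OF hz tau] by blast
      have E1: "h z * (7 * real s * D + 6 * real s * w) = 14 * real s * X1 + 6 * real s * (h z * w)" unfolding X1_def by (simp add: algebra_simps)
      have "h z * w \<le> 2 * hl * w" using hz2 w0 by (simp add: mult_right_mono)
      hence A0: "6 * real s * (h z * w) \<le> 6 * real s * (2 * hl * w)" using s1 by (intro mult_left_mono) auto
      have P: "0 \<le> real s * (hl * w)" using s1 hl0 w0 by simp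
      have A1: "6 * real s * (2 * hl * w) = 12 * (real s * (hl * w))" by simp
      have A2: "48 * real s * X2 = 24 * (real s * (hl * w))" unfolding X2_def by simp
      have B: "14 * real s * X1 + 48 * real s * X2 \<le> 14 * real s * X + 48 * real s * X" unfolding X_def using s1
        by (intro add_mono mult_left_mono) auto
      show "height h Wa Ta z \<tau> \<le> 62 * real s * X" using H E1 A0 P A1 A2 B by linarith
    qed
    moreover have "ereal X \<le> OPT n h t" "0 \<le> X" using X1 X2 unfolding X_def by (auto simp: max_def)
    ultimately show ?thesis by blast
  qed
qed

lemma s_log: "real s \<le> 2 * log 2 (of_int \<lceil>hmax n h / hm\<rceil>)"
proof -
  define q where "q = hmax n h / hm"
  have q1: "q > 1" unfolding q_def using hgt hm_pos by simp
  have "1 < \<lceil>q\<rceil>" using q1 by (simp add: less_ceiling_iff)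
  hence "2 \<le> \<lceil>q\<rceil>" by simp
  hence c2: "of_int \<lceil>q\<rceil> \<ge> (2::real)" by linarith
  have l1: "1 \<le> log 2 (of_int \<lceil>q\<rceil>)" using c2 by simp
  have "log 2 q \<le> log 2 (of_int \<lceil>q\<rceil>)" using q1 by simp
  moreover have "0 \<le> log 2 q" using q1 by simp
  hence "real (nat \<lfloor>log 2 q\<rfloor>) \<le> log 2 q" by simp
  ultimately have "real s \<le> log 2 (of_int \<lceil>q\<rceil>) + 1" unfolding num_classes_def q_def[symmetric] by simp
  thus ?thesis using l1 unfolding q_def by simp
qed

lemma main: "MH n h Wa Ta \<le> ereal (124 * log 2 (of_int \<lceil>hmax n h / hm\<rceil>)) * OPT n h t"
proof (rule MH_le, intro allI impI)
  fix z \<tau> assume z: "z < n" and tau: "(0::real) \<le> \<tau>"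
  obtain X where X: "ereal X \<le> OPT n h t" "0 \<le> X" "\<forall>\<tau>\<ge>0. height h Wa Ta z \<tau> \<le> 62 * real s * X"
    using z_bound[OF z] by blast
  have "ereal (height h Wa Ta z \<tau>) \<le> ereal (62 * real s) * ereal X" using X(3) tau by simp
  also have "\<dots> \<le> ereal (62 * real s) * OPT n h t" using X(1) s_ge1 by (intro ereal_mult_left_mono) auto
  also have "\<dots> \<le> ereal (124 * log 2 (of_int \<lceil>hmax n h / hm\<rceil>)) * OPT n h t"
  proof (rule ereal_mult_right_mono)
    show "ereal (62 * real s) \<le> ereal (124 * log 2 (of_int \<lceil>hmax n h / hm\<rceil>))" using s_log by simp
    show "0 \<le> OPT n h t" using X(1,2) by (meson ereal_less_eq(5) order_trans)
  qed
  finally show "ereal (height h Wa Ta z \<tau>) \<le> ereal (124 * log 2 (of_int \<lceil>hmax n h / hm\<rceil>)) * OPT n h t" .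
qed

end

theorem theorem5:
  "\<exists>c::real. c > 0 \<and>
     (\<forall>n h t C p0.
        n \<ge> 2 \<longrightarrow> bgt_instance n h t \<longrightarrow> hmax n h > hmin n h \<longrightarrow>
        alg_choices n h t C p0 \<longrightarrow>
        MH n h (alg_walk n h t C p0) (walk_time t (alg_walk n h t C p0))
          \<le> ereal (c * log 2 (of_int \<lceil>hmax n h / hmin n h\<rceil>)) * OPT n h t)"
proof (intro exI[of _ 124] conjI allI impI)
  fix n h t C p0
  assume "n \<ge> 2" "bgt_instance n h t" "hmax n h > hmin n h" "alg_choices n h t C p0"
  then interpret alg n h t C p0 by unfold_locales
  show "MH n h (alg_walk n h t C p0) (walk_time t (alg_walk n h t C p0))
          \<le> ereal (124 * log 2 (of_int \<lceil>hmax n h / hmin n h\<rceil>)) * OPT n h t" by (rule main)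
qed simp

end
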